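(* Let $H$ satisfy Condition (H). For every $u\in(0,\partial_+)$ there is $v\in(u,\partial_+)$ such that for all $t\ge0$ and all $(x,p)\in(-v,v)\times\mathbb R$ with $t<t_{x,p}$ and $X_t^{x,p}\in(-u,u)$, one has $X_s^{x,p}\in(-v,v)$ for all $s\in[0,t]$.
   Context: $\mathbb K$ is either $\mathbb R$ or $[-1,1]$, with interior $\mathbb K^\circ$; $\partial_-=-\infty,\partial_+=+\infty$ if $\mathbb K=\mathbb R$ and $\partial_-=-1,\partial_+=1$ if $\mathbb K=[-1,1]$. The Lagrangian is $\mathcal L(x,v)=\sup_p(pv-H(x,p))$. The Hamilton equations are $\dot X=\partial_pH(X,P)$, $\dot P=-\partial_xH(X,P)$; $(X_s^{x,p},P_s^{x,p})$ is the solution from $(x,p)$ on its maximal interval of existence $[0,t_{x,p})$. Condition (H) on $H:\mathbb K\times\mathbb R\to\mathbb R$: $H(x,0)=0$ for all $x$, and (H1) $H$ is $C^2$ with $\partial_p^2H>0$ on $\mathbb K\times\mathbb R$; if $\mathbb K=[-1,1]$, $H$ is the restriction of a $C^2$ function on $(-1-\epsilon,1+\epsilon)\times\mathbb R$ for some $\epsilon>0$. (H2) for every compact $K\subseteq\mathbb K^\circ$ there is $\theta_K:[0,\infty)\to[0,\infty)$ with $\theta_K(r)/r\to\infty$ as $r\to\infty$; for every $M\ge0$ a constant $k_M$ with $\theta_K(r+m)\le k_M(1+\theta_K(r))$ for all $m\in[0,M]$, $r\ge0$; constants $c_K,C_K$ with $\mathcal L(x,v)\ge\theta_K(|v|)-c_K$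 and $|\partial_x\mathcal L(x,v)|+|\partial_v\mathcal L(x,v)|\le C_K\theta_K(|v|)$ for all $x\in K,v\in\mathbb R$. (H3) for each compact $K\subseteq\mathbb K^\circ$, $\lim_{|p|\to\infty}\inf_{x\in K}H(x,p)/|p|=\infty$; if $\mathbb K=[-1,1]$ moreover $\lim_{p\to\infty}H(-1,p)/p=\infty$ and $\lim_{p\to-\infty}H(1,p)/(-p)=\infty$. (H4) $\lim_{x\to\partial_-}\operatorname{argmin}_pH(x,p)=-\infty$ and $\lim_{x\to\partial_+}\operatorname{argmin}_pH(x,p)=+\infty$. (H5) there are $(y_n^+,q_n^+)\in\mathbb K^\circ\times(0,\infty)$ converging to $(\partial_+,+\infty)$ with $\partial_pH(y_n^+,q)\ge0$ for $q\ge q_n^+$ and $-\partial_xH(y,q_n^+)\ge0$ for $y\ge y_n^+$, and $(y_n^-,q_n^-)\in\mathbb K^\circ\times(-\infty,0)$ converging to $(\partial_-,-\infty)$ with $\partial_pH(y_n^-,q)\le0$ for $q\le q_n^-$ and $-\partial_xH(y,q_n^-)\le0$ for $y\le y_n^-$. *)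

theory Defs
  imports "HOL-Analysis.Analysis"
begin

text \<open>The state space: b = False means K = R, b = True means K = [-1,1].\<close>
definition Kset :: "bool \<Rightarrow> real set" where
  "Kset b = (if b then {-1..1} else UNIV)"

definition to_dminus :: "bool \<Rightarrow> real filter" where
  "to_dminus b = (if b then at_right (-1) else at_bot)"

definition to_dplus :: "bool \<Rightarrow> real filter" where
  "to_dplus b = (if b then at_left 1 else at_top)"

definition C2_on :: "(real \<times> real \<Rightarrow> real) \<Rightarrow> (real \<times> real) set \<Rightarrow> bool" where
  "C2_on f U \<longleftrightarrow> (\<exists>(Df :: real \<times> real \<Rightarrow> ((real \<times> real) \<Rightarrow>\<^sub>L real))
      (D2f :: real \<times> real \<Rightarrow> ((real \<times> real) \<Rightarrow>\<^sub>L ((real \<times> real) \<Rightarrow>\<^sub>L real))).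
      (\<forall>z\<in>U. (f has_derivative blinfun_apply (Df z)) (at z)) \<and>
      (\<forall>z\<in>U. (Df has_derivative blinfun_apply (D2f z)) (at z)) \<and>
      continuous_on U D2f)"

definition dHx :: "(real \<Rightarrow> real \<Rightarrow> real) \<Rightarrow> real \<Rightarrow> real \<Rightarrow> real" where
  "dHx H x p = deriv (\<lambda>y. H y p) x"

definition dHp :: "(real \<Rightarrow> real \<Rightarrow> real) \<Rightarrow> real \<Rightarrow> real \<Rightarrow> real" where
  "dHp H x p = deriv (\<lambda>q. H x q) p"

definition dHpp :: "(real \<Rightarrow> real \<Rightarrow> real) \<Rightarrow> real \<Rightarrow> real \<Rightarrow> real" where
  "dHpp H x p = deriv (\<lambda>q. dHp H x q) p"

definition Lag :: "(real \<Rightarrow> real \<Rightarrow> real) \<Rightarrow> real \<Rightarrow> real \<Rightarrow> real" where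
  "Lag H x v = (SUP p. p * v - H x p)"

definition dLx :: "(real \<Rightarrow> real \<Rightarrow> real) \<Rightarrow> real \<Rightarrow> real \<Rightarrow> real" where
  "dLx H x v = deriv (\<lambda>y. Lag H y v) x"

definition dLv :: "(real \<Rightarrow> real \<Rightarrow> real) \<Rightarrow> real \<Rightarrow> real \<Rightarrow> real" where
  "dLv H x v = deriv (\<lambda>w. Lag H x w) v"

definition argminp :: "(real \<Rightarrow> real \<Rightarrow> real) \<Rightarrow> real \<Rightarrow> real" where
  "argminp H x = arg_min (H x) (\<lambda>_. True)"

definition condH0 :: "bool \<Rightarrow> (real \<Rightarrow> real \<Rightarrow> real) \<Rightarrow> bool" where
  "condH0 b H \<longleftrightarrow> (\<forall>x\<in>Kset b. H x 0 = 0)"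

definition condH1 :: "bool \<Rightarrow> (real \<Rightarrow> real \<Rightarrow> real) \<Rightarrow> bool" where
  "condH1 b H \<longleftrightarrow>
     (if b then (\<exists>\<epsilon>>0. C2_on (\<lambda>(x,p). H x p) ({-1-\<epsilon><..<1+\<epsilon>} \<times> UNIV))
      else C2_on (\<lambda>(x,p). H x p) UNIV) \<and>
     (\<forall>x\<in>Kset b. \<forall>p. dHpp H x p > 0)"

definition condH2 :: "bool \<Rightarrow> (real \<Rightarrow> real \<Rightarrow> real) \<Rightarrow> bool" where
  "condH2 b H \<longleftrightarrow> (\<forall>C. compact C \<and> C \<subseteq> interior (Kset b) \<longrightarrow>
     (\<exists>\<theta> :: real \<Rightarrow> real.
        (\<forall>r\<ge>0. \<theta> r \<ge> 0) \<and>
        filterlim (\<lambda>r. \<theta> r / r) at_top at_top \<and>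
        (\<forall>M\<ge>0. \<exists>k. \<forall>m\<in>{0..M}. \<forall>r\<ge>0. \<theta> (r + m) \<le> k * (1 + \<theta> r)) \<and>
        (\<exists>c Cc. \<forall>x\<in>C. \<forall>v. Lag H x v \<ge> \<theta> \<bar>v\<bar> - c \<and>
                 \<bar>dLx H x v\<bar> + \<bar>dLv H x v\<bar> \<le> Cc * \<theta> \<bar>v\<bar>)))"

definition condH3 :: "bool \<Rightarrow> (real \<Rightarrow> real \<Rightarrow> real) \<Rightarrow> bool" where
  "condH3 b H \<longleftrightarrow> (\<forall>C. compact C \<and> C \<noteq> {} \<and> C \<subseteq> interior (Kset b) \<longrightarrow>
       filterlim (\<lambda>p. (INF x\<in>C. H x p) / \<bar>p\<bar>) at_top at_infinity) \<and>
     (b \<longrightarrow> filterlim (\<lambda>p. H (-1) p / p) at_top at_top \<and>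
            filterlim (\<lambda>p. H 1 p / (-p)) at_top at_bot)"

definition condH4 :: "bool \<Rightarrow> (real \<Rightarrow> real \<Rightarrow> real) \<Rightarrow> bool" where
  "condH4 b H \<longleftrightarrow> filterlim (argminp H) at_bot (to_dminus b) \<and>
                   filterlim (argminp H) at_top (to_dplus b)"

definition condH5 :: "bool \<Rightarrow> (real \<Rightarrow> real \<Rightarrow> real) \<Rightarrow> bool" where
  "condH5 b H \<longleftrightarrow>
     (\<exists>yp qp :: nat \<Rightarrow> real.
        (\<forall>n. yp n \<in> interior (Kset b) \<and> qp n > 0) \<and>
        filterlim yp (to_dplus b) sequentially \<and> filterlim qp at_top sequentially \<and>
        (\<forall>n q. q \<ge> qp n \<longrightarrow> dHp H (yp n) q \<ge> 0) \<and>
        (\<forall>n y. y \<in> Kset b \<and> y \<ge> yp n \<longrightarrow> - dHx H y (qp n) \<ge> 0)) \<and>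
     (\<exists>ym qm :: nat \<Rightarrow> real.
        (\<forall>n. ym n \<in> interior (Kset b) \<and> qm n < 0) \<and>
        filterlim ym (to_dminus b) sequentially \<and> filterlim qm at_bot sequentially \<and>
        (\<forall>n q. q \<le> qm n \<longrightarrow> dHp H (ym n) q \<le> 0) \<and>
        (\<forall>n y. y \<in> Kset b \<and> y \<le> ym n \<longrightarrow> - dHx H y (qm n) \<le> 0))"

definition condH :: "bool \<Rightarrow> (real \<Rightarrow> real \<Rightarrow> real) \<Rightarrow> bool" where
  "condH b H \<longleftrightarrow> condH0 b H \<and> condH1 b H \<and> condH2 b H \<and> condH3 b H \<and>
                 condH4 b H \<and> condH5 b H"

definition ham_sol :: "bool \<Rightarrow> (real \<Rightarrow> real \<Rightarrow> real) \<Rightarrow> real \<Rightarrow> real \<Rightarrow> real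
    \<Rightarrow> (real \<Rightarrow> real \<times> real) \<Rightarrow> bool" where
  "ham_sol b H x p T Y \<longleftrightarrow> 0 < T \<and> Y 0 = (x, p) \<and>
     (\<forall>s\<in>{0..<T}. fst (Y s) \<in> Kset b \<and>
        (Y has_vector_derivative
           (dHp H (fst (Y s)) (snd (Y s)), - dHx H (fst (Y s)) (snd (Y s))))
        (at s within {0..<T}))"

definition exit_time :: "bool \<Rightarrow> (real \<Rightarrow> real \<Rightarrow> real) \<Rightarrow> real \<Rightarrow> real \<Rightarrow> ereal" where
  "exit_time b H x p = (SUP T\<in>{T. \<exists>Y. ham_sol b H x p T Y}. ereal T)"

definition flow :: "bool \<Rightarrow> (real \<Rightarrow> real \<Rightarrow> real) \<Rightarrow> real \<Rightarrow> real \<Rightarrow> real \<Rightarrow> real \<times> real" where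
  "flow b H x p s = (THE z. \<exists>T Y. ham_sol b H x p T Y \<and> s < T \<and> Y s = z)"

definition Xflow :: "bool \<Rightarrow> (real \<Rightarrow> real \<Rightarrow> real) \<Rightarrow> real \<Rightarrow> real \<Rightarrow> real \<Rightarrow> real" where
  "Xflow b H x p s = fst (flow b H x p s)"

end

theory Submission
  imports Defs
begin


lemma zero_prop:
  fixes D :: "real \<Rightarrow> real"
  assumes cont: "continuous_on {a..c} D" and D0: "D a = 0"
    and nn: "\<forall>s\<in>{a..c}. D s \<ge> 0" and L: "L \<ge> 0"
    and step: "\<And>\<sigma> s1 M. a \<le> \<sigma> \<Longrightarrow> \<sigma> \<le> s1 \<Longrightarrow> s1 \<le> c \<Longrightarrow> D \<sigma> = 0 \<Longrightarrow>
        (\<forall>s\<in>{\<sigma>..s1}. D s \<le> M) \<Longrightarrow> D s1 \<le> L*(s1-\<sigma>)*M"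
  shows "\<forall>s\<in>{a..c}. D s = 0"
proof (cases "a \<le> c")
  case False then show ?thesis by auto
next
  case ac: True
  define h where "h = 1/(2*L+1)"
  have hpos: "h > 0" using L by (simp add: h_def)
  have Lh: "L*h \<le> 1/2" using L by (simp add: h_def field_simps)
  have claim: "\<forall>s\<in>{a..min c (a + real k*h)}. D s = 0" for k
  proof (induction k)
    case 0 then show ?case using D0 by auto
  next
    case (Suc k)
    define \<sigma> where "\<sigma> = min c (a + real k*h)"
    define e where "e = min c (a + real (Suc k)*h)"
    have as: "a \<le> \<sigma>" using ac hpos by (simp add: \<sigma>_def)
    have se: "\<sigma> \<le> e" using hpos by (auto simp: \<sigma>_def e_def min_def algebra_simps)
    have eh: "e - \<sigma> \<le> h" using hpos by (auto simp: \<sigma>_def e_def min_def algebra_simps)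
    have ec: "e \<le> c" by (simp add: e_def)
    have Ds: "D \<sigma> = 0" using Suc.IH as by (auto simp: \<sigma>_def)
    have "continuous_on {\<sigma>..e} D" by (rule continuous_on_subset[OF cont]) (use as ec in auto)
    then obtain s0 where s0: "s0 \<in> {\<sigma>..e}" and mx: "\<forall>y\<in>{\<sigma>..e}. D y \<le> D s0"
      using continuous_attains_sup[of "{\<sigma>..e}" D] se by auto
    have M0: "D s0 \<ge> 0" using nn s0 as ec by auto
    have "D s0 \<le> L*(s0-\<sigma>)*D s0"
      using step[OF as _ _ Ds, of s0 "D s0"] s0 ec mx by auto
    also have "\<dots> \<le> L*h*D s0"
      using s0 eh L M0 by (intro mult_right_mono mult_left_mono) auto
    also have "\<dots> \<le> 1/2 * D s0" using Lh M0 by (intro mult_right_mono) auto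
    finally have "D s0 \<le> 0" by simp
    hence z: "\<forall>y\<in>{\<sigma>..e}. D y = 0"
    proof (intro ballI)
      fix y assume y: "y \<in> {\<sigma>..e}"
      have "D y \<le> D s0" using mx y by auto
      moreover have "D y \<ge> 0" using nn y as ec by auto
      ultimately show "D y = 0" using \<open>D s0 \<le> 0\<close> by linarith
    qed
    show ?case
    proof
      fix s assume s: "s \<in> {a..min c (a + real (Suc k) * h)}"
      show "D s = 0"
      proof (cases "s \<le> \<sigma>")
        case True then show ?thesis using Suc.IH s by (auto simp: \<sigma>_def)
      next
        case False then show ?thesis using z s by (auto simp: e_def)
      qed
    qed
  qed
  show ?thesis
  proof
    fix s assume s: "s \<in> {a..c}"
    obtain k :: nat where "(s - a)/h \<le> real k" using real_arch_simple by blast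
    hence "s \<le> a + real k * h" using hpos by (simp add: field_simps)
    thus "D s = 0" using claim[of k] s by auto
  qed
qed



lemma C2_lip:
  fixes Df :: "real \<times> real \<Rightarrow> ((real \<times> real) \<Rightarrow>\<^sub>L real)"
  assumes d2: "\<forall>z\<in>U. (Df has_derivative blinfun_apply (D2f z)) (at z)"
    and c2: "continuous_on U D2f"
    and R: "compact R" "convex R" "R \<subseteq> U"
  shows "\<exists>L\<ge>0. \<forall>z1\<in>R. \<forall>z2\<in>R. norm (Df z1 - Df z2) \<le> L * norm (z1 - z2)"
proof -
  have "compact (D2f ` R)"
    using R by (intro compact_continuous_image continuous_on_subset[OF c2]) auto
  then obtain B where B: "\<forall>y\<in>D2f ` R. norm y \<le> B"
    using compact_imp_bounded bounded_iff by metis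
  define L where "L = max B 0"
  have "\<forall>z1\<in>R. \<forall>z2\<in>R. norm (Df z1 - Df z2) \<le> L * norm (z1 - z2)"
  proof (intro ballI)
    fix z1 z2 assume z: "z1 \<in> R" "z2 \<in> R"
    show "norm (Df z1 - Df z2) \<le> L * norm (z1 - z2)"
    proof (rule differentiable_bound[where f' = "\<lambda>z. blinfun_apply (D2f z)"])
      show "convex R" by fact
      show "(Df has_derivative blinfun_apply (D2f x)) (at x within R)" if "x \<in> R" for x
        using d2 R(3) that by (auto intro: has_derivative_at_withinI)
      show "onorm (blinfun_apply (D2f x)) \<le> L" if "x \<in> R" for x
        using B that by (auto simp: norm_blinfun.rep_eq[symmetric] L_def)
    qed (use z in auto)
  qed
  thus ?thesis unfolding L_def by (intro exI[of _ "max B 0"]) auto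
qed

lemma C2_dp:
  fixes Df :: "real \<times> real \<Rightarrow> ((real \<times> real) \<Rightarrow>\<^sub>L real)"
  assumes "((\<lambda>(x,p). H x p) has_derivative blinfun_apply (Df (x,p))) (at (x,p))"
  shows "((\<lambda>q. H x q) has_real_derivative blinfun_apply (Df (x,p)) (0,1)) (at p)"
    and "((\<lambda>y. H y p) has_real_derivative blinfun_apply (Df (x,p)) (1,0)) (at x)"
proof -
  have a: "((\<lambda>q. (x,q)) has_derivative (\<lambda>h. (0,h))) (at p)"
    by (auto intro!: derivative_eq_intros)
  have "((\<lambda>q. (\<lambda>(x,p). H x p) (x,q)) has_derivative (\<lambda>h. blinfun_apply (Df (x,p)) (0,h))) (at p)"
    using has_derivative_compose[OF a assms] by (simp add: o_def)
  moreover have "(\<lambda>h. blinfun_apply (Df (x,p)) (0,h)) = (\<lambda>h. blinfun_apply (Df (x,p)) (0,1) * h)"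
  proof
    fix h :: real
    have "(0::real,h) = h *\<^sub>R (0,1)" by simp
    thus "blinfun_apply (Df (x,p)) (0,h) = blinfun_apply (Df (x,p)) (0,1) * h"
      by (metis blinfun.scaleR_right mult.commute real_scaleR_def)
  qed
  ultimately show "((\<lambda>q. H x q) has_real_derivative blinfun_apply (Df (x,p)) (0,1)) (at p)"
    by (simp add: has_field_derivative_def)
  have b: "((\<lambda>y. (y,p)) has_derivative (\<lambda>h. (h,0))) (at x)"
    by (auto intro!: derivative_eq_intros)
  have "((\<lambda>y. (\<lambda>(x,p). H x p) (y,p)) has_derivative (\<lambda>h. blinfun_apply (Df (x,p)) (h,0))) (at x)"
    using has_derivative_compose[OF b assms] by (simp add: o_def)
  moreover have "(\<lambda>h. blinfun_apply (Df (x,p)) (h,0)) = (\<lambda>h. blinfun_apply (Df (x,p)) (1,0) * h)"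
  proof
    fix h :: real
    have "(h,0::real) = h *\<^sub>R (1,0)" by simp
    thus "blinfun_apply (Df (x,p)) (h,0) = blinfun_apply (Df (x,p)) (1,0) * h"
      by (metis blinfun.scaleR_right mult.commute real_scaleR_def)
  qed
  ultimately show "((\<lambda>y. H y p) has_real_derivative blinfun_apply (Df (x,p)) (1,0)) (at x)"
    by (simp add: has_field_derivative_def)
qed

lemma C2_dpp:
  fixes Df :: "real \<times> real \<Rightarrow> ((real \<times> real) \<Rightarrow>\<^sub>L real)"
  assumes "(Df has_derivative blinfun_apply (D2f (x,p))) (at (x,p))"
  shows "(\<lambda>q. blinfun_apply (Df (x,q)) (0,1)) differentiable (at p)"
proof -
  have a: "((\<lambda>q. (x,q)) has_derivative (\<lambda>h. (0,h))) (at p)"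
    by (auto intro!: derivative_eq_intros)
  have "((\<lambda>q. Df (x,q)) has_derivative (\<lambda>h. blinfun_apply (D2f (x,p)) (0,h))) (at p)"
    using has_derivative_compose[OF a assms] by (simp add: o_def)
  hence "(\<lambda>q. Df (x,q)) differentiable (at p)" unfolding differentiable_def by blast
  moreover have "(\<lambda>A. blinfun_apply A (0,1)) differentiable (at (Df (x,p)))"
    by (rule bounded_linear_imp_differentiable) (rule blinfun.bounded_linear_left)
  ultimately show ?thesis using differentiable_chain_at by (fastforce simp: o_def)
qed

lemma condH1_U:
  assumes "condH1 b H"
  obtains U where "open U" "Kset b \<times> UNIV \<subseteq> U" "C2_on (\<lambda>(x,p). H x p) U"
proof (cases b)
  case True
  then obtain \<epsilon> where e: "\<epsilon> > 0" "C2_on (\<lambda>(x,p). H x p) ({-1-\<epsilon><..<1+\<epsilon>} \<times> UNIV)"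
    using assms by (auto simp: condH1_def)
  show ?thesis
    by (rule that[OF _ _ e(2)]) (use e True in \<open>auto simp: Kset_def intro!: open_Times\<close>)
next
  case False
  then show ?thesis using assms that[of UNIV] by (auto simp: condH1_def)
qed

lemma Kset_closed: "closed (Kset b)" and Kset_convex: "convex (Kset b)"
  by (auto simp: Kset_def)

lemma H_reg:
  assumes "condH1 b H"
  shows "\<exists>L\<ge>0. \<forall>x1 x2 p1 p2. x1\<in>Kset b \<and> x2 \<in> Kset b \<and> \<bar>x1\<bar>\<le>c \<and> \<bar>x2\<bar> \<le> c \<and> \<bar>p1\<bar> \<le> c \<and> \<bar>p2\<bar> \<le> c \<longrightarrow>
     \<bar>dHp H x1 p1 - dHp H x2 p2\<bar> \<le> L*(\<bar>x1-x2\<bar>+\<bar>p1-p2\<bar>) \<and>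
     \<bar>dHx H x1 p1 - dHx H x2 p2\<bar> \<le> L*(\<bar>x1-x2\<bar>+\<bar>p1-p2\<bar>)"
    and "x\<in>Kset b \<Longrightarrow> p < q \<Longrightarrow> dHp H x p < dHp H x q"
proof -
  obtain U where U: "open U" "Kset b \<times> UNIV \<subseteq> U" "C2_on (\<lambda>(x,p). H x p) U"
    using condH1_U[OF assms] by blast
  then obtain Df :: "real \<times> real \<Rightarrow> ((real \<times> real) \<Rightarrow>\<^sub>L real)" and
      D2f :: "real \<times> real \<Rightarrow> ((real \<times> real) \<Rightarrow>\<^sub>L ((real \<times> real) \<Rightarrow>\<^sub>L real))" where
    D: "\<forall>z\<in>U. ((\<lambda>(x,p). H x p) has_derivative blinfun_apply (Df z)) (at z)"
       "\<forall>z\<in>U. (Df has_derivative blinfun_apply (D2f z)) (at z)" "continuous_on U D2f"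
    unfolding C2_on_def by blast
  have dp: "dHp H x p = blinfun_apply (Df (x,p)) (0,1)" and dx: "dHx H x p = blinfun_apply (Df (x,p)) (1,0)"
    if "x \<in> Kset b" for x p
  proof -
    have "(x,p) \<in> U" using U that by auto
    hence "((\<lambda>(x,p). H x p) has_derivative blinfun_apply (Df (x,p))) (at (x,p))" using D by auto
    from C2_dp[where H=H and Df=Df and x=x and p=p, OF this] show "dHp H x p = blinfun_apply (Df (x,p)) (0,1)" "dHx H x p = blinfun_apply (Df (x,p)) (1,0)"
      unfolding dHp_def dHx_def by (auto intro: DERIV_imp_deriv)
  qed
  define R where "R = ({-c..c} \<inter> Kset b) \<times> {-c..c}"
  have "compact R" unfolding R_def by (intro compact_Times compact_Int_closed Kset_closed) auto
  moreover have "convex R" unfolding R_def by (intro convex_Times convex_Int Kset_convex) auto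
  moreover have "R \<subseteq> U" using U unfolding R_def by auto
  ultimately obtain L where L: "L \<ge> 0" "\<forall>z1\<in>R. \<forall>z2\<in>R. norm (Df z1 - Df z2) \<le> L * norm (z1 - z2)"
    using C2_lip[OF D(2,3)] by blast
  have gen: "\<bar>blinfun_apply (Df z1) v - blinfun_apply (Df z2) v\<bar> \<le> L * norm (z1 - z2)"
    if "z1 \<in> R" "z2 \<in> R" "norm v = 1" for z1 z2 v
  proof -
    have "\<bar>blinfun_apply (Df z1) v - blinfun_apply (Df z2) v\<bar> = norm (blinfun_apply (Df z1 - Df z2) v)"
      by (simp add: blinfun.diff_left)
    also have "\<dots> \<le> norm (Df z1 - Df z2) * norm v" by (rule norm_blinfun)
    also have "\<dots> \<le> L * norm (z1 - z2)" using L that by simp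
    finally show ?thesis .
  qed
  have "\<forall>x1 x2 p1 p2. x1\<in>Kset b \<and> x2 \<in> Kset b \<and> \<bar>x1\<bar>\<le>c \<and> \<bar>x2\<bar> \<le> c \<and> \<bar>p1\<bar> \<le> c \<and> \<bar>p2\<bar> \<le> c \<longrightarrow>
     \<bar>dHp H x1 p1 - dHp H x2 p2\<bar> \<le> L*(\<bar>x1-x2\<bar>+\<bar>p1-p2\<bar>) \<and>
     \<bar>dHx H x1 p1 - dHx H x2 p2\<bar> \<le> L*(\<bar>x1-x2\<bar>+\<bar>p1-p2\<bar>)"
  proof (intro allI impI)
    fix x1 x2 p1 p2 assume h: "x1\<in>Kset b \<and> x2 \<in> Kset b \<and> \<bar>x1\<bar>\<le>c \<and> \<bar>x2\<bar> \<le> c \<and> \<bar>p1\<bar> \<le> c \<and> \<bar>p2\<bar> \<le> c"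
    hence z: "(x1,p1) \<in> R" "(x2,p2) \<in> R" unfolding R_def by auto
    have nn: "norm ((x1,p1) - (x2,p2)) \<le> \<bar>x1-x2\<bar>+\<bar>p1-p2\<bar>"
      using norm_Pair_le[of "x1-x2" "p1-p2"] by simp
    have "L * norm ((x1,p1) - (x2,p2)) \<le> L*(\<bar>x1-x2\<bar>+\<bar>p1-p2\<bar>)" using nn L(1) by (rule mult_left_mono[OF _ ])
    thus "\<bar>dHp H x1 p1 - dHp H x2 p2\<bar> \<le> L*(\<bar>x1-x2\<bar>+\<bar>p1-p2\<bar>) \<and>
     \<bar>dHx H x1 p1 - dHx H x2 p2\<bar> \<le> L*(\<bar>x1-x2\<bar>+\<bar>p1-p2\<bar>)"
      using gen[OF z, of "(0,1)"] gen[OF z, of "(1,0)"] h dp dx by auto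
  qed
  thus "\<exists>L\<ge>0. \<forall>x1 x2 p1 p2. x1\<in>Kset b \<and> x2 \<in> Kset b \<and> \<bar>x1\<bar>\<le>c \<and> \<bar>x2\<bar> \<le> c \<and> \<bar>p1\<bar> \<le> c \<and> \<bar>p2\<bar> \<le> c \<longrightarrow>
     \<bar>dHp H x1 p1 - dHp H x2 p2\<bar> \<le> L*(\<bar>x1-x2\<bar>+\<bar>p1-p2\<bar>) \<and>
     \<bar>dHx H x1 p1 - dHx H x2 p2\<bar> \<le> L*(\<bar>x1-x2\<bar>+\<bar>p1-p2\<bar>)" using L(1) by blast
  assume x: "x\<in>Kset b" and pq: "p < q"
  have eq: "(\<lambda>q. dHp H x q) = (\<lambda>q. blinfun_apply (Df (x,q)) (0,1))" using dp[OF x] by auto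
  show "dHp H x p < dHp H x q"
  proof (rule DERIV_pos_imp_increasing[OF pq])
    fix r
    have "(x,r) \<in> U" using U x by auto
    hence "(\<lambda>q. dHp H x q) differentiable (at r)" unfolding eq using D(2) by (intro C2_dpp) auto
    hence "DERIV (\<lambda>q. dHp H x q) r :> dHpp H x r"
      unfolding dHpp_def using DERIV_deriv_iff_real_differentiable by blast
    moreover have "dHpp H x r > 0" using assms x by (auto simp: condH1_def)
    ultimately show "\<exists>y. DERIV (\<lambda>q. dHp H x q) r :> y \<and> y > 0" by blast
  qed
qed



lemma last_point:
  fixes P :: "real \<Rightarrow> real"
  assumes "\<sigma> \<le> s1" "continuous_on {\<sigma>..s1} P" "P \<sigma> \<ge> q" "P s1 < q"
  shows "\<exists>r. \<sigma> \<le> r \<and> r < s1 \<and> P r \<ge> q \<and> (\<forall>s. r < s \<and> s \<le> s1 \<longrightarrow> P s < q)"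
proof -
  define Z where "Z = {s\<in>{\<sigma>..s1}. (\<lambda>_. q) s \<le> P s}"
  have "closed Z" unfolding Z_def
    by (rule continuous_on_closed_Collect_le) (use assms in auto)
  moreover have "bounded Z" unfolding Z_def by (rule bounded_subset[of "{\<sigma>..s1}"]) auto
  ultimately have cZ: "compact Z" by (simp add: compact_eq_bounded_closed)
  have "\<sigma> \<in> Z" using assms by (auto simp: Z_def)
  then obtain r where r: "r \<in> Z" "\<forall>y\<in>Z. y \<le> r"
    using continuous_attains_sup[OF cZ, of "\<lambda>x. x"] by (auto intro: continuous_on_id)
  have "r \<noteq> s1" using r assms by (auto simp: Z_def)
  hence "r < s1" using r by (auto simp: Z_def)
  moreover have "\<forall>s. r < s \<and> s \<le> s1 \<longrightarrow> P s < q"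
  proof (intro allI impI)
    fix s assume s: "r < s \<and> s \<le> s1"
    have "\<sigma> \<le> r" using r by (auto simp: Z_def)
    show "P s < q"
    proof (rule ccontr)
      assume "\<not> P s < q"
      hence "s \<in> Z" using s \<open>\<sigma> \<le> r\<close> by (auto simp: Z_def)
      thus False using r s by auto
    qed
  qed
  ultimately show ?thesis using r by (auto simp: Z_def)
qed

lemma invariance:
  fixes X P :: "real \<Rightarrow> real" and F G :: "real \<Rightarrow> real \<Rightarrow> real"
  assumes tt: "\<tau> \<le> t"
    and cX: "continuous_on {\<tau>..t} X" and cP: "continuous_on {\<tau>..t} P"
    and der: "\<And>s. \<tau> < s \<Longrightarrow> s < t \<Longrightarrow> (X has_real_derivative F (X s) (P s)) (at s) \<and>
                                     (P has_real_derivative G (X s) (P s)) (at s)"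
    and S: "\<And>s. s\<in>{\<tau>..t} \<Longrightarrow> X s \<in> S \<and> \<bar>X s\<bar> \<le> c \<and> \<bar>P s\<bar> \<le> c"
    and Lip: "\<And>x1 x2 p1 p2. x1\<in>S \<Longrightarrow> x2\<in>S \<Longrightarrow> \<bar>x1\<bar>\<le>c \<Longrightarrow> \<bar>x2\<bar>\<le>c \<Longrightarrow> \<bar>p1\<bar>\<le>c \<Longrightarrow> \<bar>p2\<bar>\<le>c \<Longrightarrow>
          \<bar>F x1 p1 - F x2 p2\<bar> \<le> L*(\<bar>x1-x2\<bar>+\<bar>p1-p2\<bar>) \<and> \<bar>G x1 p1 - G x2 p2\<bar> \<le> L*(\<bar>x1-x2\<bar>+\<bar>p1-p2\<bar>)"
    and L: "L \<ge> 0"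
    and bar1: "\<And>q. q \<ge> qn \<Longrightarrow> F yn q \<ge> 0"
    and bar2: "\<And>y. y \<in> S \<Longrightarrow> y \<ge> yn \<Longrightarrow> G y qn \<ge> 0"
    and yn: "yn \<in> S" "\<bar>yn\<bar> \<le> c" and qn: "\<bar>qn\<bar> \<le> c"
    and start: "X \<tau> \<ge> yn" "P \<tau> \<ge> qn"
  shows "\<forall>s\<in>{\<tau>..t}. X s \<ge> yn \<and> P s \<ge> qn"
proof -
  define D where "D s = max 0 (qn - P s) + max 0 (yn - X s)" for s
  have cD: "continuous_on {\<tau>..t} D" unfolding D_def
    by (intro continuous_intros cX cP)
  have Dn: "\<forall>s\<in>{\<tau>..t}. D s \<ge> 0" by (auto simp: D_def)
  have Gl: "G (X s) (P s) \<ge> - L * D s" if s: "s \<in> {\<tau>..t}" "P s < qn" for s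
  proof -
    define x' where "x' = max (X s) yn"
    have x': "x' \<in> S" "\<bar>x'\<bar> \<le> c" "x' \<ge> yn" using S[OF s(1)] yn by (auto simp: x'_def max_def)
    have "\<bar>G x' qn - G (X s) (P s)\<bar> \<le> L*(\<bar>x' - X s\<bar>+\<bar>qn - P s\<bar>)"
      using Lip[OF x'(1) _ x'(2) _ qn, of "X s" "P s"] S[OF s(1)] by auto
    moreover have "\<bar>x' - X s\<bar>+\<bar>qn - P s\<bar> = D s" using s(2) by (auto simp: x'_def D_def max_def)
    moreover have "G x' qn \<ge> 0" using bar2 x' by auto
    ultimately show ?thesis by (smt (verit) L mult_minus_left)
  qed
  have Fl: "F (X s) (P s) \<ge> - L * D s" if s: "s \<in> {\<tau>..t}" "X s < yn" for s
  proof -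
    define p' where "p' = max (P s) qn"
    have p': "\<bar>p'\<bar> \<le> c" "p' \<ge> qn" using S[OF s(1)] qn by (auto simp: p'_def max_def)
    have "\<bar>F yn p' - F (X s) (P s)\<bar> \<le> L*(\<bar>yn - X s\<bar>+\<bar>p' - P s\<bar>)"
      using Lip[OF yn(1) _ yn(2) _ p'(1), of "X s" "P s"] S[OF s(1)] by auto
    moreover have "\<bar>yn - X s\<bar>+\<bar>p' - P s\<bar> = D s" using s(2) by (auto simp: p'_def D_def max_def)
    moreover have "F yn p' \<ge> 0" using bar1 p' by auto
    ultimately show ?thesis by (smt (verit) L mult_minus_left)
  qed
  have "\<forall>s\<in>{\<tau>..t}. D s = 0"
  proof (rule zero_prop[OF cD _ Dn, of "2*L"])
    show "D \<tau> = 0" using start by (auto simp: D_def)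
    show "0 \<le> 2*L" using L by simp
    fix \<sigma> s1 M
    assume h: "\<tau> \<le> \<sigma>" "\<sigma> \<le> s1" "s1 \<le> t" "D \<sigma> = 0" and M: "\<forall>s\<in>{\<sigma>..s1}. D s \<le> M"
    have "D \<sigma> \<le> M" using M h(2) by simp
    hence M0: "M \<ge> 0" using h by simp
    have st: "\<sigma> \<ge> 0 \<Longrightarrow> True" by simp
    have ps: "P \<sigma> \<ge> qn" "X \<sigma> \<ge> yn" using h(4) by (auto simp: D_def max_def split: if_splits)
    have Dle: "D s \<le> M" if "s \<in> {\<sigma>..s1}" for s using M that by auto
    have A: "max 0 (qn - P s1) \<le> L*(s1-\<sigma>)*M"
    proof (cases "P s1 < qn")
      case False then show ?thesis using L M0 h by simp
    next
      case True
      have cPs: "continuous_on {\<sigma>..s1} P" using h by (intro continuous_on_subset[OF cP]) auto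
      obtain r where r: "\<sigma> \<le> r" "r < s1" "P r \<ge> qn" "\<forall>s. r < s \<and> s \<le> s1 \<longrightarrow> P s < qn"
        using last_point[OF h(2) cPs ps(1) True] by blast
      have cr: "continuous_on {r..s1} P" by (rule continuous_on_subset[OF cPs]) (use r in auto)
      have dr: "P differentiable (at x)" if "r < x" "x < s1" for x
      proof -
        have "(P has_real_derivative G (X x) (P x)) (at x)" using der[of x] that r h by auto
        thus ?thesis unfolding real_differentiable_def by blast
      qed
      obtain l z where z: "r < z" "z < s1" "DERIV P z :> l" "P s1 - P r = (s1 - r) * l"
        using MVT[OF r(2) cr dr] by blast
      have zI: "z \<in> {\<tau>..t}" using z r h by auto
      have "(P has_real_derivative G (X z) (P z)) (at z)" using der[of z] z r h by auto
      hence lz: "l = G (X z) (P z)" using DERIV_unique[OF z(3)] by blast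
      have "D z \<le> M" using Dle[of z] r z by auto
      hence "L * D z \<le> L * M" using L by (rule mult_left_mono)
      hence lM: "l \<ge> - (L * M)" using Gl[OF zI] r z lz by auto
      have "(s1 - r) * (- (L*M)) \<le> (s1 - r) * l" using lM r by (intro mult_left_mono) auto
      hence "qn - P s1 \<le> (s1 - r) * (L * M)" using z(4) r(3) by (simp add: algebra_simps)
      also have "\<dots> \<le> (s1 - \<sigma>) * (L*M)" using r L M0 by (intro mult_right_mono) auto
      finally show ?thesis using True by (simp add: max_def algebra_simps)
    qed
    have B: "max 0 (yn - X s1) \<le> L*(s1-\<sigma>)*M"
    proof (cases "X s1 < yn")
      case False then show ?thesis using L M0 h by simp
    next
      case True
      have cXs: "continuous_on {\<sigma>..s1} X" using h by (intro continuous_on_subset[OF cX]) auto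
      obtain r where r: "\<sigma> \<le> r" "r < s1" "X r \<ge> yn" "\<forall>s. r < s \<and> s \<le> s1 \<longrightarrow> X s < yn"
        using last_point[OF h(2) cXs ps(2) True] by blast
      have cr: "continuous_on {r..s1} X" by (rule continuous_on_subset[OF cXs]) (use r in auto)
      have dr: "X differentiable (at x)" if "r < x" "x < s1" for x
      proof -
        have "(X has_real_derivative F (X x) (P x)) (at x)" using der[of x] that r h by auto
        thus ?thesis unfolding real_differentiable_def by blast
      qed
      obtain l z where z: "r < z" "z < s1" "DERIV X z :> l" "X s1 - X r = (s1 - r) * l"
        using MVT[OF r(2) cr dr] by blast
      have zI: "z \<in> {\<tau>..t}" using z r h by auto
      have "(X has_real_derivative F (X z) (P z)) (at z)" using der[of z] z r h by auto
      hence lz: "l = F (X z) (P z)" using DERIV_unique[OF z(3)] by blast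
      have "D z \<le> M" using Dle[of z] r z by auto
      hence "L * D z \<le> L * M" using L by (rule mult_left_mono)
      hence lM: "l \<ge> - (L * M)" using Fl[OF zI] r z lz by auto
      have "(s1 - r) * (- (L*M)) \<le> (s1 - r) * l" using lM r by (intro mult_left_mono) auto
      hence "yn - X s1 \<le> (s1 - r) * (L * M)" using z(4) r(3) by (simp add: algebra_simps)
      also have "\<dots> \<le> (s1 - \<sigma>) * (L*M)" using r L M0 by (intro mult_right_mono) auto
      finally show ?thesis using True by (simp add: max_def algebra_simps)
    qed
    have "D s1 \<le> L*(s1-\<sigma>)*M + L*(s1-\<sigma>)*M" using A B unfolding D_def by linarith
    thus "D s1 \<le> 2 * L * (s1 - \<sigma>) * M" by (simp add: algebra_simps)
  qed
  thus ?thesis by (auto simp: D_def max_def split: if_splits)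
qed



lemma uniq_abs:
  fixes X1 P1 X2 P2 :: "real \<Rightarrow> real" and F G :: "real \<Rightarrow> real \<Rightarrow> real"
  assumes s0: "0 \<le> s"
    and c1: "continuous_on {0..s} X1" "continuous_on {0..s} P1"
    and c2: "continuous_on {0..s} X2" "continuous_on {0..s} P2"
    and d1: "\<And>\<xi>. 0 < \<xi> \<Longrightarrow> \<xi> < s \<Longrightarrow> (X1 has_real_derivative F (X1 \<xi>) (P1 \<xi>)) (at \<xi>) \<and>
                                     (P1 has_real_derivative G (X1 \<xi>) (P1 \<xi>)) (at \<xi>)"
    and d2: "\<And>\<xi>. 0 < \<xi> \<Longrightarrow> \<xi> < s \<Longrightarrow> (X2 has_real_derivative F (X2 \<xi>) (P2 \<xi>)) (at \<xi>) \<and>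
                                     (P2 has_real_derivative G (X2 \<xi>) (P2 \<xi>)) (at \<xi>)"
    and S: "\<And>\<xi>. \<xi>\<in>{0..s} \<Longrightarrow> X1 \<xi> \<in> S \<and> \<bar>X1 \<xi>\<bar> \<le> c \<and> \<bar>P1 \<xi>\<bar> \<le> c \<and> X2 \<xi> \<in> S \<and> \<bar>X2 \<xi>\<bar> \<le> c \<and> \<bar>P2 \<xi>\<bar> \<le> c"
    and Lip: "\<And>x1 x2 p1 p2. x1\<in>S \<Longrightarrow> x2\<in>S \<Longrightarrow> \<bar>x1\<bar>\<le>c \<Longrightarrow> \<bar>x2\<bar>\<le>c \<Longrightarrow> \<bar>p1\<bar>\<le>c \<Longrightarrow> \<bar>p2\<bar>\<le>c \<Longrightarrow>
          \<bar>F x1 p1 - F x2 p2\<bar> \<le> L*(\<bar>x1-x2\<bar>+\<bar>p1-p2\<bar>) \<and> \<bar>G x1 p1 - G x2 p2\<bar> \<le> L*(\<bar>x1-x2\<bar>+\<bar>p1-p2\<bar>)"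
    and L: "L \<ge> 0"
    and init: "X1 0 = X2 0" "P1 0 = P2 0"
  shows "X1 s = X2 s \<and> P1 s = P2 s"
proof -
  define D where "D r = \<bar>X1 r - X2 r\<bar> + \<bar>P1 r - P2 r\<bar>" for r
  have cD: "continuous_on {0..s} D" unfolding D_def
    by (intro continuous_intros c1 c2)
  have Dn: "\<forall>r\<in>{0..s}. D r \<ge> 0" by (auto simp: D_def)
  have gen: "\<bar>(A1 s1 - A2 s1)\<bar> \<le> L*(s1-\<sigma>)*M"
    if h: "0 \<le> \<sigma>" "\<sigma> \<le> s1" "s1 \<le> s" "A1 \<sigma> = A2 \<sigma>" and M: "\<forall>r\<in>{\<sigma>..s1}. D r \<le> M" and M0: "M \<ge> 0"
      and cA: "continuous_on {0..s} A1" "continuous_on {0..s} A2"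
      and dA: "\<And>\<xi>. 0 < \<xi> \<Longrightarrow> \<xi> < s \<Longrightarrow> (A1 has_real_derivative K (X1 \<xi>) (P1 \<xi>)) (at \<xi>) \<and>
                                     (A2 has_real_derivative K (X2 \<xi>) (P2 \<xi>)) (at \<xi>)"
      and KL: "\<And>\<xi>. \<xi>\<in>{0..s} \<Longrightarrow> \<bar>K (X1 \<xi>) (P1 \<xi>) - K (X2 \<xi>) (P2 \<xi>)\<bar> \<le> L * D \<xi>"
    for A1 A2 :: "real \<Rightarrow> real" and K :: "real \<Rightarrow> real \<Rightarrow> real" and \<sigma> s1 M
  proof (cases "\<sigma> = s1")
    case True then show ?thesis using h by simp
  next
    case False
    hence lt: "\<sigma> < s1" using h by simp
    define f where "f r = A1 r - A2 r" for r
    have cf: "continuous_on {\<sigma>..s1} f" unfolding f_def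
      by (intro continuous_intros continuous_on_subset[OF cA(1)] continuous_on_subset[OF cA(2)]) (use h in auto)
    have df: "(f has_real_derivative K (X1 \<xi>) (P1 \<xi>) - K (X2 \<xi>) (P2 \<xi>)) (at \<xi>)" if "\<sigma> < \<xi>" "\<xi> < s1" for \<xi>
      unfolding f_def using dA[of \<xi>] that h by (auto intro!: derivative_eq_intros)
    have dd: "f differentiable (at \<xi>)" if "\<sigma> < \<xi>" "\<xi> < s1" for \<xi>
      using df[OF that] unfolding real_differentiable_def by blast
    obtain l z where z: "\<sigma> < z" "z < s1" "DERIV f z :> l" "f s1 - f \<sigma> = (s1 - \<sigma>) * l"
      using MVT[OF lt cf dd] by blast
    have lz: "l = K (X1 z) (P1 z) - K (X2 z) (P2 z)" using DERIV_unique[OF z(3) df[OF z(1,2)]] .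
    have "\<bar>l\<bar> \<le> L * D z" using KL[of z] z h lz by auto
    also have "\<dots> \<le> L * M" using M z L by (intro mult_left_mono) auto
    finally have "\<bar>l\<bar> \<le> L*M" .
    hence "\<bar>(s1 - \<sigma>) * l\<bar> \<le> (s1-\<sigma>) * (L*M)" using lt by (simp add: abs_mult mult_left_mono)
    moreover have "f \<sigma> = 0" using h by (simp add: f_def)
    ultimately show ?thesis using z(4) by (simp add: f_def algebra_simps)
  qed
  have KL1: "\<bar>F (X1 \<xi>) (P1 \<xi>) - F (X2 \<xi>) (P2 \<xi>)\<bar> \<le> L * D \<xi>" and
       KL2: "\<bar>G (X1 \<xi>) (P1 \<xi>) - G (X2 \<xi>) (P2 \<xi>)\<bar> \<le> L * D \<xi>" if "\<xi>\<in>{0..s}" for \<xi>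
    using Lip[of "X1 \<xi>" "X2 \<xi>" "P1 \<xi>" "P2 \<xi>"] S[OF that] by (auto simp: D_def)
  have "\<forall>r\<in>{0..s}. D r = 0"
  proof (rule zero_prop[OF cD _ Dn, of "2*L"])
    show "D 0 = 0" using init by (simp add: D_def)
    show "0 \<le> 2*L" using L by simp
    fix \<sigma> s1 M
    assume h: "0 \<le> \<sigma>" "\<sigma> \<le> s1" "s1 \<le> s" "D \<sigma> = 0" and M: "\<forall>r\<in>{\<sigma>..s1}. D r \<le> M"
    have "D \<sigma> \<le> M" using M h(2) by simp
    hence M0: "M \<ge> 0" using h by simp
    have e: "X1 \<sigma> = X2 \<sigma>" "P1 \<sigma> = P2 \<sigma>" using h(4) unfolding D_def by auto
    have A: "\<bar>X1 s1 - X2 s1\<bar> \<le> L*(s1-\<sigma>)*M"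
      by (rule gen[OF h(1-3) e(1) M M0 c1(1) c2(1), of F]) (use d1 d2 KL1 in auto)
    have B: "\<bar>P1 s1 - P2 s1\<bar> \<le> L*(s1-\<sigma>)*M"
      by (rule gen[OF h(1-3) e(2) M M0 c1(2) c2(2), of G]) (use d1 d2 KL2 in auto)
    have "D s1 \<le> L*(s1-\<sigma>)*M + L*(s1-\<sigma>)*M" using A B unfolding D_def by linarith
    thus "D s1 \<le> 2 * L * (s1 - \<sigma>) * M" by (simp add: algebra_simps)
  qed
  hence "D s = 0" using s0 by auto
  thus ?thesis unfolding D_def by (smt (verit))
qed

lemma ham_facts:
  assumes hs: "ham_sol b H x p T Y" and s: "0 \<le> s" "s < T"
  shows "continuous_on {0..s} (\<lambda>r. fst (Y r))" "continuous_on {0..s} (\<lambda>r. snd (Y r))"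
    and "\<And>\<xi>. 0 < \<xi> \<Longrightarrow> \<xi> < T \<Longrightarrow>
        ((\<lambda>r. fst (Y r)) has_real_derivative dHp H (fst (Y \<xi>)) (snd (Y \<xi>))) (at \<xi>) \<and>
        ((\<lambda>r. snd (Y r)) has_real_derivative - dHx H (fst (Y \<xi>)) (snd (Y \<xi>))) (at \<xi>)"
    and "\<exists>c. \<forall>r\<in>{0..s}. \<bar>fst (Y r)\<bar> \<le> c \<and> \<bar>snd (Y r)\<bar> \<le> c"
    and "\<forall>r\<in>{0..s}. fst (Y r) \<in> Kset b"
    and "Y 0 = (x,p)"
proof -
  have H: "0 < T" "Y 0 = (x, p)"
     "\<forall>s\<in>{0..<T}. fst (Y s) \<in> Kset b \<and>
        (Y has_vector_derivative
           (dHp H (fst (Y s)) (snd (Y s)), - dHx H (fst (Y s)) (snd (Y s))))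
        (at s within {0..<T})" using hs unfolding ham_sol_def by auto
  show "Y 0 = (x,p)" using H by simp
  show "\<forall>r\<in>{0..s}. fst (Y r) \<in> Kset b" using H s by auto
  have cY: "continuous_on {0..<T} Y"
    unfolding continuous_on_eq_continuous_within
    using H(3) has_vector_derivative_continuous by blast
  hence cYs: "continuous_on {0..s} Y" by (rule continuous_on_subset) (use s in auto)
  show c1: "continuous_on {0..s} (\<lambda>r. fst (Y r))" "continuous_on {0..s} (\<lambda>r. snd (Y r))"
    using cYs by (auto intro: continuous_on_fst continuous_on_snd)
  show "\<And>\<xi>. 0 < \<xi> \<Longrightarrow> \<xi> < T \<Longrightarrow>
        ((\<lambda>r. fst (Y r)) has_real_derivative dHp H (fst (Y \<xi>)) (snd (Y \<xi>))) (at \<xi>) \<and>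
        ((\<lambda>r. snd (Y r)) has_real_derivative - dHx H (fst (Y \<xi>)) (snd (Y \<xi>))) (at \<xi>)"
  proof -
    fix \<xi> :: real assume \<xi>: "0 < \<xi>" "\<xi> < T"
    have "interior {0..<T} = {0<..<T}" by simp
    hence eq: "at \<xi> within {0..<T} = at \<xi>" using \<xi> by (intro at_within_interior) auto
    have "\<xi> \<in> {0..<T}" using \<xi> by auto
    hence "(Y has_vector_derivative
           (dHp H (fst (Y \<xi>)) (snd (Y \<xi>)), - dHx H (fst (Y \<xi>)) (snd (Y \<xi>)))) (at \<xi>)"
      using H(3) eq by metis
    hence D: "(Y has_derivative (\<lambda>h. h *\<^sub>R (dHp H (fst (Y \<xi>)) (snd (Y \<xi>)), - dHx H (fst (Y \<xi>)) (snd (Y \<xi>))))) (at \<xi>)"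
      by (simp add: has_vector_derivative_def)
    have "((\<lambda>r. fst (Y r)) has_derivative (\<lambda>h. fst (h *\<^sub>R (dHp H (fst (Y \<xi>)) (snd (Y \<xi>)), - dHx H (fst (Y \<xi>)) (snd (Y \<xi>)))))) (at \<xi>)"
      by (rule has_derivative_fst[OF D])
    moreover have "((\<lambda>r. snd (Y r)) has_derivative (\<lambda>h. snd (h *\<^sub>R (dHp H (fst (Y \<xi>)) (snd (Y \<xi>)), - dHx H (fst (Y \<xi>)) (snd (Y \<xi>)))))) (at \<xi>)"
      by (rule has_derivative_snd[OF D])
    ultimately show "((\<lambda>r. fst (Y r)) has_real_derivative dHp H (fst (Y \<xi>)) (snd (Y \<xi>))) (at \<xi>) \<and>
        ((\<lambda>r. snd (Y r)) has_real_derivative - dHx H (fst (Y \<xi>)) (snd (Y \<xi>))) (at \<xi>)"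
      unfolding has_field_derivative_def
    proof (simp only: fst_scaleR snd_scaleR fst_conv snd_conv real_scaleR_def)
      have e1: "(\<lambda>h::real. h * a) = (*) a" for a by (rule ext) (simp add: mult.commute)
      assume "((\<lambda>r. fst (Y r)) has_derivative (\<lambda>h. h * dHp H (fst (Y \<xi>)) (snd (Y \<xi>)))) (at \<xi>)"
         "((\<lambda>r. snd (Y r)) has_derivative (\<lambda>h. h * - dHx H (fst (Y \<xi>)) (snd (Y \<xi>)))) (at \<xi>)"
      thus "((\<lambda>r. fst (Y r)) has_derivative (*) (dHp H (fst (Y \<xi>)) (snd (Y \<xi>)))) (at \<xi>) \<and>
        ((\<lambda>r. snd (Y r)) has_derivative (*) (- dHx H (fst (Y \<xi>)) (snd (Y \<xi>)))) (at \<xi>)"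
        unfolding e1 by simp
    qed
  qed
  have "compact (Y ` {0..s})" by (rule compact_continuous_image[OF cYs]) simp
  then obtain c where c: "\<forall>y\<in>Y ` {0..s}. norm y \<le> c" using compact_imp_bounded bounded_iff by metis
  show "\<exists>c. \<forall>r\<in>{0..s}. \<bar>fst (Y r)\<bar> \<le> c \<and> \<bar>snd (Y r)\<bar> \<le> c"
  proof (intro exI ballI conjI)
    fix r assume r: "r \<in> {0..s}"
    have n: "norm (Y r) \<le> c" using c r by auto
    have "norm (fst (Y r)) \<le> norm (Y r)" using norm_fst_le[of "fst (Y r)" "snd (Y r)"] by simp
    thus "\<bar>fst (Y r)\<bar> \<le> c" using n by simp
    have "norm (snd (Y r)) \<le> norm (Y r)" using norm_snd_le[of "snd (Y r)" "fst (Y r)"] by simp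
    thus "\<bar>snd (Y r)\<bar> \<le> c" using n by simp
  qed
qed



lemma H_deriv:
  assumes "condH1 b H" "x \<in> Kset b"
  shows "DERIV (H x) q :> dHp H x q"
proof -
  obtain U where U: "open U" "Kset b \<times> UNIV \<subseteq> U" "C2_on (\<lambda>(x,p). H x p) U"
    using condH1_U[OF assms(1)] by blast
  then obtain Df :: "real \<times> real \<Rightarrow> ((real \<times> real) \<Rightarrow>\<^sub>L real)" where
    D: "\<forall>z\<in>U. ((\<lambda>(x,p). H x p) has_derivative blinfun_apply (Df z)) (at z)"
    unfolding C2_on_def by blast
  have "(x,q) \<in> U" using U assms by auto
  hence "((\<lambda>(x,p). H x p) has_derivative blinfun_apply (Df (x,q))) (at (x,q))" using D by auto
  from C2_dp(1)[where H=H and Df=Df and x=x and p=q, OF this]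
  have "DERIV (H x) q :> blinfun_apply (Df (x, q)) (0, 1)" .
  moreover hence "dHp H x q = blinfun_apply (Df (x, q)) (0, 1)" unfolding dHp_def
    by (intro DERIV_imp_deriv)
  ultimately show ?thesis by simp
qed

lemma ham_uniq:
  assumes H1: "condH1 b H" and h1: "ham_sol b H x p T1 Y1" and h2: "ham_sol b H x p T2 Y2"
    and s: "0 \<le> s" "s < T1" "s < T2"
  shows "Y1 s = Y2 s"
proof -
  note f1 = ham_facts[OF h1 s(1,2)] and f2 = ham_facts[OF h2 s(1,3)]
  obtain c1 where c1: "\<forall>r\<in>{0..s}. \<bar>fst (Y1 r)\<bar> \<le> c1 \<and> \<bar>snd (Y1 r)\<bar> \<le> c1" using f1(4) by blast
  obtain c2 where c2: "\<forall>r\<in>{0..s}. \<bar>fst (Y2 r)\<bar> \<le> c2 \<and> \<bar>snd (Y2 r)\<bar> \<le> c2" using f2(4) by blast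
  define c where "c = max c1 c2"
  obtain L where L: "L \<ge> 0" "\<forall>x1 x2 p1 p2. x1\<in>Kset b \<and> x2 \<in> Kset b \<and> \<bar>x1\<bar>\<le>c \<and> \<bar>x2\<bar> \<le> c \<and> \<bar>p1\<bar> \<le> c \<and> \<bar>p2\<bar> \<le> c \<longrightarrow>
     \<bar>dHp H x1 p1 - dHp H x2 p2\<bar> \<le> L*(\<bar>x1-x2\<bar>+\<bar>p1-p2\<bar>) \<and>
     \<bar>dHx H x1 p1 - dHx H x2 p2\<bar> \<le> L*(\<bar>x1-x2\<bar>+\<bar>p1-p2\<bar>)"
    using H_reg(1)[OF H1, of c] by blast
  have "fst (Y1 s) = fst (Y2 s) \<and> snd (Y1 s) = snd (Y2 s)"
  proof (rule uniq_abs[where ?X1.0 = "\<lambda>r. fst (Y1 r)" and ?P1.0 = "\<lambda>r. snd (Y1 r)" and ?X2.0 = "\<lambda>r. fst (Y2 r)" and ?P2.0 = "\<lambda>r. snd (Y2 r)" and s = s and F = "dHp H" and G = "\<lambda>x p. - dHx H x p" and S = "Kset b" and c = c and L = L])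
    show "0 \<le> s" by fact
    show "continuous_on {0..s} (\<lambda>r. fst (Y1 r))" "continuous_on {0..s} (\<lambda>r. snd (Y1 r))"
         "continuous_on {0..s} (\<lambda>r. fst (Y2 r))" "continuous_on {0..s} (\<lambda>r. snd (Y2 r))"
      using f1(1,2) f2(1,2) by auto
    show "((\<lambda>r. fst (Y1 r)) has_real_derivative dHp H (fst (Y1 \<xi>)) (snd (Y1 \<xi>))) (at \<xi>) \<and>
          ((\<lambda>r. snd (Y1 r)) has_real_derivative - dHx H (fst (Y1 \<xi>)) (snd (Y1 \<xi>))) (at \<xi>)"
      if "0 < \<xi>" "\<xi> < s" for \<xi> using f1(3)[of \<xi>] that s by auto
    show "((\<lambda>r. fst (Y2 r)) has_real_derivative dHp H (fst (Y2 \<xi>)) (snd (Y2 \<xi>))) (at \<xi>) \<and>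
          ((\<lambda>r. snd (Y2 r)) has_real_derivative - dHx H (fst (Y2 \<xi>)) (snd (Y2 \<xi>))) (at \<xi>)"
      if "0 < \<xi>" "\<xi> < s" for \<xi> using f2(3)[of \<xi>] that s by auto
    show "fst (Y1 \<xi>) \<in> Kset b \<and> \<bar>fst (Y1 \<xi>)\<bar> \<le> c \<and> \<bar>snd (Y1 \<xi>)\<bar> \<le> c \<and>
          fst (Y2 \<xi>) \<in> Kset b \<and> \<bar>fst (Y2 \<xi>)\<bar> \<le> c \<and> \<bar>snd (Y2 \<xi>)\<bar> \<le> c" if "\<xi> \<in> {0..s}" for \<xi>
    proof -
      have "\<bar>fst (Y1 \<xi>)\<bar> \<le> c1" "\<bar>snd (Y1 \<xi>)\<bar> \<le> c1" using c1 that by auto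
      moreover have "\<bar>fst (Y2 \<xi>)\<bar> \<le> c2" "\<bar>snd (Y2 \<xi>)\<bar> \<le> c2" using c2 that by auto
      moreover have "c1 \<le> c" "c2 \<le> c" by (auto simp: c_def)
      moreover have "fst (Y1 \<xi>) \<in> Kset b" "fst (Y2 \<xi>) \<in> Kset b" using f1(5) f2(5) that by auto
      ultimately show ?thesis by linarith
    qed
    show "\<bar>dHp H x1 p1 - dHp H x2 p2\<bar> \<le> L*(\<bar>x1-x2\<bar>+\<bar>p1-p2\<bar>) \<and>
          \<bar>- dHx H x1 p1 - - dHx H x2 p2\<bar> \<le> L*(\<bar>x1-x2\<bar>+\<bar>p1-p2\<bar>)"
      if "x1\<in>Kset b" "x2\<in>Kset b" "\<bar>x1\<bar>\<le>c" "\<bar>x2\<bar>\<le>c" "\<bar>p1\<bar>\<le>c" "\<bar>p2\<bar>\<le>c" for x1 x2 p1 p2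
    proof -
      have "\<bar>dHp H x1 p1 - dHp H x2 p2\<bar> \<le> L*(\<bar>x1-x2\<bar>+\<bar>p1-p2\<bar>) \<and>
         \<bar>dHx H x1 p1 - dHx H x2 p2\<bar> \<le> L*(\<bar>x1-x2\<bar>+\<bar>p1-p2\<bar>)" using L(2) that by blast
      moreover have "\<bar>- dHx H x1 p1 - - dHx H x2 p2\<bar> = \<bar>dHx H x1 p1 - dHx H x2 p2\<bar>" by linarith
      ultimately show ?thesis by simp
    qed
    show "0 \<le> L" by fact
    show "fst (Y1 0) = fst (Y2 0)" "snd (Y1 0) = snd (Y2 0)" using f1(6) f2(6) by auto
  qed
  thus ?thesis by (simp add: prod_eq_iff)
qed

lemma flow_eq:
  assumes H1: "condH1 b H" and h: "ham_sol b H x p T Y" and s: "0 \<le> s" "s < T"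
  shows "flow b H x p s = Y s"
  unfolding flow_def
proof (rule the_equality)
  show "\<exists>T' Y'. ham_sol b H x p T' Y' \<and> s < T' \<and> Y' s = Y s" using h s by blast
  fix z assume "\<exists>T' Y'. ham_sol b H x p T' Y' \<and> s < T' \<and> Y' s = z"
  then obtain T' Y' where "ham_sol b H x p T' Y'" "s < T'" "Y' s = z" by blast
  thus "z = Y s" using ham_uniq[OF H1 _ h s(1) _ s(2)] by metis
qed

lemma core_side:
  fixes X P :: "real \<Rightarrow> real" and F G :: "real \<Rightarrow> real \<Rightarrow> real"
  assumes t0: "0 \<le> t"
    and cX: "continuous_on {0..t} X" and cP: "continuous_on {0..t} P"
    and der: "\<And>s. 0 < s \<Longrightarrow> s < t \<Longrightarrow> (X has_real_derivative F (X s) (P s)) (at s) \<and>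
                                     (P has_real_derivative G (X s) (P s)) (at s)"
    and S: "\<And>s. s\<in>{0..t} \<Longrightarrow> X s \<in> S \<and> \<bar>X s\<bar> \<le> c \<and> \<bar>P s\<bar> \<le> c"
    and Lip: "\<And>x1 x2 p1 p2. x1\<in>S \<Longrightarrow> x2\<in>S \<Longrightarrow> \<bar>x1\<bar>\<le>c \<Longrightarrow> \<bar>x2\<bar>\<le>c \<Longrightarrow> \<bar>p1\<bar>\<le>c \<Longrightarrow> \<bar>p2\<bar>\<le>c \<Longrightarrow>
          \<bar>F x1 p1 - F x2 p2\<bar> \<le> L*(\<bar>x1-x2\<bar>+\<bar>p1-p2\<bar>) \<and> \<bar>G x1 p1 - G x2 p2\<bar> \<le> L*(\<bar>x1-x2\<bar>+\<bar>p1-p2\<bar>)"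
    and L: "L \<ge> 0"
    and bar1: "\<And>q. q \<ge> qn \<Longrightarrow> F yn q \<ge> 0"
    and bar2: "\<And>y. y \<in> S \<Longrightarrow> y \<ge> yn \<Longrightarrow> G y qn \<ge> 0"
    and yn: "yn \<in> S" "\<bar>yn\<bar> \<le> c" and qn: "\<bar>qn\<bar> \<le> c"
    and turn: "\<And>x p. x \<in> S \<Longrightarrow> x \<ge> v \<Longrightarrow> p < qn \<Longrightarrow> F x p \<noteq> 0"
    and uy: "u < yn" "yn \<le> v" and X0: "X 0 < v" and Xt: "X t < u"
  shows "\<forall>s\<in>{0..t}. X s < v"
proof (rule ccontr)
  assume "\<not> (\<forall>s\<in>{0..t}. X s < v)"
  then obtain s where s: "s \<in> {0..t}" "X s \<ge> v" by force
  obtain \<tau> where \<tau>: "\<tau> \<in> {0..t}" "\<forall>y\<in>{0..t}. X y \<le> X \<tau>"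
    using continuous_attains_sup[OF _ _ cX] t0 by auto
  have Xv: "X \<tau> \<ge> v" using \<tau> s by force
  have t1: "\<tau> \<noteq> 0" using Xv X0 by auto
  have t2: "\<tau> \<noteq> t" using Xv Xt uy by auto
  have ti: "0 < \<tau>" "\<tau> < t" using t1 t2 \<tau> by auto
  have dX: "DERIV X \<tau> :> F (X \<tau>) (P \<tau>)" using der[OF ti] by auto
  have "F (X \<tau>) (P \<tau>) = 0"
  proof (rule DERIV_local_max[OF dX, of "min \<tau> (t - \<tau>)"])
    show "0 < min \<tau> (t - \<tau>)" using ti by auto
    show "\<forall>y. \<bar>\<tau> - y\<bar> < min \<tau> (t - \<tau>) \<longrightarrow> X y \<le> X \<tau>"
    proof (intro allI impI)
      fix y assume "\<bar>\<tau> - y\<bar> < min \<tau> (t - \<tau>)"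
      hence "y \<in> {0..t}" by (auto simp: abs_less_iff)
      thus "X y \<le> X \<tau>" using \<tau>(2) by blast
    qed
  qed
  hence Pq: "P \<tau> \<ge> qn" using turn[of "X \<tau>" "P \<tau>"] S[OF \<tau>(1)] Xv by force
  have "\<forall>s\<in>{\<tau>..t}. X s \<ge> yn \<and> P s \<ge> qn"
  proof (rule invariance[where F = F and G = G and S = S and c = c and L = L])
    show "\<tau> \<le> t" using ti by simp
    show "continuous_on {\<tau>..t} X" "continuous_on {\<tau>..t} P"
      using continuous_on_subset[OF cX] continuous_on_subset[OF cP] ti by auto
    show "(X has_real_derivative F (X s) (P s)) (at s) \<and> (P has_real_derivative G (X s) (P s)) (at s)"
      if "\<tau> < s" "s < t" for s using der[of s] that ti by auto
    show "X s \<in> S \<and> \<bar>X s\<bar> \<le> c \<and> \<bar>P s\<bar> \<le> c" if "s \<in> {\<tau>..t}" for s using S[of s] that ti by auto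
    show "\<bar>F x1 p1 - F x2 p2\<bar> \<le> L*(\<bar>x1-x2\<bar>+\<bar>p1-p2\<bar>) \<and> \<bar>G x1 p1 - G x2 p2\<bar> \<le> L*(\<bar>x1-x2\<bar>+\<bar>p1-p2\<bar>)"
      if "x1\<in>S" "x2\<in>S" "\<bar>x1\<bar>\<le>c" "\<bar>x2\<bar>\<le>c" "\<bar>p1\<bar>\<le>c" "\<bar>p2\<bar>\<le>c" for x1 x2 p1 p2
      by (rule Lip[OF that])
    show "0 \<le> L" by fact
    show "F yn q \<ge> 0" if "q \<ge> qn" for q using bar1 that by blast
    show "G y qn \<ge> 0" if "y \<in> S" "y \<ge> yn" for y using bar2 that by blast
    show "yn \<in> S" "\<bar>yn\<bar> \<le> c" "\<bar>qn\<bar> \<le> c" using yn qn by auto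
    show "X \<tau> \<ge> yn" using Xv uy by linarith
    show "P \<tau> \<ge> qn" by fact
  qed
  hence "X t \<ge> yn" using ti by auto
  thus False using Xt uy by auto
qed

lemma boundary_neg:
  fixes F :: "real \<Rightarrow> real \<Rightarrow> real"
  assumes mono: "\<And>p q. p < q \<Longrightarrow> F e p < F e q"
    and near: "\<And>x p. v \<le> x \<Longrightarrow> x < e \<Longrightarrow> p < q0 \<Longrightarrow> F x p < 0"
    and lip: "\<And>p. \<exists>L\<ge>0. \<forall>x\<in>{v..e}. \<bar>F x p - F e p\<bar> \<le> L*\<bar>x - e\<bar>"
    and ve: "v < e" and p: "p < q0"
  shows "F e p < 0"
proof -
  define p' where "p' = (p + q0)/2"
  have pp: "p < p'" "p' < q0" using p by (auto simp: p'_def)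
  have "F e p' \<le> 0"
  proof (rule ccontr)
    assume "\<not> F e p' \<le> 0"
    hence ep: "F e p' > 0" by simp
    obtain L where L: "L \<ge> 0" "\<forall>x\<in>{v..e}. \<bar>F x p' - F e p'\<bar> \<le> L*\<bar>x - e\<bar>" using lip by blast
    define x where "x = max v (e - F e p' / (2*(L+1)))"
    have xe: "v \<le> x" "x < e" using ve ep L by (auto simp: x_def)
    have "\<bar>x - e\<bar> \<le> F e p' / (2*(L+1))" using xe by (auto simp: x_def)
    hence "L*\<bar>x - e\<bar> \<le> L * (F e p' / (2*(L+1)))" using L by (intro mult_left_mono) auto
    also have "\<dots> < F e p'"
    proof -
      have e1: "L * (F e p' / (2*(L+1))) = F e p' * (L/(2*(L+1)))" by simp
      have "L/(2*(L+1)) < 1" using L by (simp add: field_simps)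
      hence "F e p' * (L/(2*(L+1))) < F e p' * 1" using ep by (intro mult_strict_left_mono) auto
      thus ?thesis using e1 by (simp add: mult.commute)
    qed
    finally have "\<bar>F x p' - F e p'\<bar> < F e p'" using L xe by force
    moreover have "F x p' < 0" using near[OF xe pp(2)] .
    ultimately show False by linarith
  qed
  thus ?thesis using mono[OF pp(1)] by linarith
qed



lemma interior_K: "interior (Kset b) = (if b then {-1<..<1} else UNIV)"
  by (auto simp: Kset_def)

lemma Kset_neg: "x \<in> Kset b \<Longrightarrow> -x \<in> Kset b"
  by (auto simp: Kset_def)

lemma intK_neg: "x \<in> interior (Kset b) \<Longrightarrow> -x \<in> interior (Kset b)"
  by (auto simp: interior_K split: if_splits)

lemma ev_plus_gt: "u \<in> interior (Kset b) \<Longrightarrow> eventually (\<lambda>y. u < y) (to_dplus b)"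
  by (cases b) (auto simp: to_dplus_def interior_K eventually_at_left_field intro: exI[of _ u])

lemma ev_minus_lt: "u \<in> interior (Kset b) \<Longrightarrow> eventually (\<lambda>y. y < u) (to_dminus b)"
  by (cases b) (auto simp: to_dminus_def interior_K eventually_at_right_field eventually_at_bot_linorder
      intro: exI[of _ u] exI[of _ "u - 1"])

lemma ev_plus:
  assumes "eventually P (to_dplus b)" "u \<in> interior (Kset b)"
  shows "\<exists>w. u \<le> w \<and> w \<in> interior (Kset b) \<and> (\<forall>x. x \<in> interior (Kset b) \<and> w \<le> x \<longrightarrow> P x)"
proof (cases b)
  case True
  then obtain c where c: "c < 1" "\<forall>y>c. y < 1 \<longrightarrow> P y"
    using assms(1) by (auto simp: to_dplus_def eventually_at_left_field)
  show ?thesis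
    by (rule exI[of _ "max u ((c+1)/2)"]) (use c True assms(2) in \<open>auto simp: interior_K\<close>)
next
  case False
  then obtain N where N: "\<forall>n\<ge>N. P n" using assms(1) by (auto simp: to_dplus_def eventually_at_top_linorder)
  show ?thesis
    by (rule exI[of _ "max u N"]) (use N False in \<open>auto simp: interior_K\<close>)
qed

lemma ev_minus:
  assumes "eventually P (to_dminus b)" "u \<in> interior (Kset b)"
  shows "\<exists>w. w \<le> u \<and> w \<in> interior (Kset b) \<and> (\<forall>x. x \<in> interior (Kset b) \<and> x \<le> w \<longrightarrow> P x)"
proof (cases b)
  case True
  then obtain c where c: "c > -1" "\<forall>y>(-1). y < c \<longrightarrow> P y"
    using assms(1) by (auto simp: to_dminus_def eventually_at_right_field)
  show ?thesis
    by (rule exI[of _ "min u ((c-1)/2)"]) (use c True assms(2) in \<open>auto simp: interior_K\<close>)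
next
  case False
  then obtain N where N: "\<forall>n\<le>N. P n" using assms(1) by (auto simp: to_dminus_def eventually_at_bot_linorder)
  show ?thesis
    by (rule exI[of _ "min u N"]) (use N False in \<open>auto simp: interior_K\<close>)
qed

lemma argmin_crit:
  assumes H: "condH b H" and x: "x \<in> interior (Kset b)"
  shows "dHp H x (argminp H x) = 0"
proof -
  have H0: "condH0 b H" and H1: "condH1 b H" and H3: "condH3 b H" using H by (auto simp: condH_def)
  have xK: "x \<in> Kset b" using x interior_subset by blast
  have "filterlim (\<lambda>p. (INF x\<in>{x}. H x p) / \<bar>p\<bar>) at_top at_infinity"
    using H3 x unfolding condH3_def by auto
  hence "filterlim (\<lambda>p. H x p / \<bar>p\<bar>) at_top at_infinity" by simp
  hence "eventually (\<lambda>p. 1 \<le> H x p / \<bar>p\<bar>) at_infinity" by (simp add: filterlim_at_top)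
  then obtain R where R: "\<forall>p. R \<le> norm p \<longrightarrow> 1 \<le> H x p / \<bar>p\<bar>" by (auto simp: eventually_at_infinity)
  define R' where "R' = max R 1"
  have big: "H x p > 0" if "\<bar>p\<bar> \<ge> R'" for p
  proof -
    have "1 \<le> H x p / \<bar>p\<bar>" using R that by (auto simp: R'_def)
    moreover have "\<bar>p\<bar> > 0" using that by (auto simp: R'_def)
    ultimately have "\<bar>p\<bar> \<le> H x p" by (simp add: le_divide_eq)
    thus ?thesis using \<open>\<bar>p\<bar> > 0\<close> by linarith
  qed
  have dH: "DERIV (H x) q :> dHp H x q" for q using H_deriv[OF H1 xK] .
  have cH: "continuous_on {-R'..R'} (H x)"
    using dH by (intro continuous_at_imp_continuous_on) (auto intro: DERIV_isCont)
  have R1: "R' \<ge> 1" by (simp add: R'_def)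
  hence ne: "{-R'..R'} \<noteq> {}" by simp
  obtain m0 where m0: "m0 \<in> {-R'..R'}" "\<forall>y\<in>{-R'..R'}. H x m0 \<le> H x y"
    using continuous_attains_inf[OF compact_Icc ne cH] by blast
  have "H x m0 \<le> H x 0" using m0 R1 by auto
  also have "H x 0 = 0" using H0 xK by (auto simp: condH0_def)
  finally have m00: "H x m0 \<le> 0" .
  have "\<forall>p. H x m0 \<le> H x p"
  proof
    fix p show "H x m0 \<le> H x p"
    proof (cases "\<bar>p\<bar> \<ge> R'")
      case True then show ?thesis using big[OF True] m00 by linarith
    next
      case False
      hence "p \<in> {-R'..R'}" by (auto simp: abs_if split: if_splits)
      then show ?thesis using m0 by blast
    qed
  qed
  hence "is_arg_min (H x) (\<lambda>_. True) m0" by (simp add: is_arg_min_linorder)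
  hence "is_arg_min (H x) (\<lambda>_. True) (argminp H x)" unfolding argminp_def arg_min_def by (rule someI)
  hence mn: "\<forall>p. H x (argminp H x) \<le> H x p" by (simp add: is_arg_min_linorder)
  show ?thesis
    by (rule DERIV_local_min[OF dH, of 1]) (use mn in auto)
qed

lemma turn_int_right:
  assumes H: "condH b H" and x: "x \<in> interior (Kset b)" and q: "argminp H x \<ge> q" and p: "p < q"
  shows "dHp H x p < 0"
proof -
  have H1: "condH1 b H" using H by (auto simp: condH_def)
  have xK: "x \<in> Kset b" using x interior_subset by blast
  have "dHp H x p < dHp H x (argminp H x)" using H_reg(2)[OF H1 xK] p q by auto
  thus ?thesis using argmin_crit[OF H x] by simp
qed

lemma turn_int_left:
  assumes H: "condH b H" and x: "x \<in> interior (Kset b)" and q: "argminp H x \<le> q" and p: "p > q"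
  shows "dHp H x p > 0"
proof -
  have H1: "condH1 b H" using H by (auto simp: condH_def)
  have xK: "x \<in> Kset b" using x interior_subset by blast
  have "dHp H x (argminp H x) < dHp H x p" using H_reg(2)[OF H1 xK] p q by auto
  thus ?thesis using argmin_crit[OF H x] by simp
qed



lemma K_bd: "x \<in> Kset b \<Longrightarrow> x \<notin> interior (Kset b) \<Longrightarrow> b \<and> (x = 1 \<or> x = -1)"
  by (auto simp: Kset_def interior_K split: if_splits)

theorem mainTheorem11:
  fixes b :: bool and H :: "real \<Rightarrow> real \<Rightarrow> real" and u :: real
  assumes "condH b H"
    and "0 < u" and "u \<in> interior (Kset b)"
  shows "\<exists>v. u < v \<and> v \<in> interior (Kset b) \<and>
           (\<forall>t x p. 0 \<le> t \<and> x \<in> {-v<..<v} \<and> ereal t < exit_time b H x p \<and>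
                    Xflow b H x p t \<in> {-u<..<u} \<longrightarrow>
                    (\<forall>s\<in>{0..t}. Xflow b H x p s \<in> {-v<..<v}))"
proof -
  note H = assms(1)
  have H1: "condH1 b H" and H4: "condH4 b H" and H5: "condH5 b H" using H by (auto simp: condH_def)
  obtain yp qp :: "nat \<Rightarrow> real" where
    P1: "\<forall>n. yp n \<in> interior (Kset b) \<and> qp n > 0" and
    P2: "filterlim yp (to_dplus b) sequentially" and
    P3: "\<forall>n q. q \<ge> qp n \<longrightarrow> dHp H (yp n) q \<ge> 0" and
    P4: "\<forall>n y. y \<in> Kset b \<and> y \<ge> yp n \<longrightarrow> - dHx H y (qp n) \<ge> 0"
    using H5 unfolding condH5_def by blast
  obtain ym qm :: "nat \<Rightarrow> real" where
    M1: "\<forall>n. ym n \<in> interior (Kset b) \<and> qm n < 0" and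
    M2: "filterlim ym (to_dminus b) sequentially" and
    M3: "\<forall>n q. q \<le> qm n \<longrightarrow> dHp H (ym n) q \<le> 0" and
    M4: "\<forall>n y. y \<in> Kset b \<and> y \<le> ym n \<longrightarrow> - dHx H y (qm n) \<le> 0"
    using H5 unfolding condH5_def by blast
  have "eventually (\<lambda>n. u < yp n) sequentially"
    using P2 ev_plus_gt[OF assms(3)] unfolding filterlim_iff by blast
  then obtain n where n: "u < yp n" by (auto simp: eventually_sequentially)
  have mu: "-u \<in> interior (Kset b)" using intK_neg[OF assms(3)] .
  have "eventually (\<lambda>n. ym n < -u) sequentially"
    using M2 ev_minus_lt[OF mu] unfolding filterlim_iff by blast
  then obtain m where m: "ym m < -u" by (auto simp: eventually_sequentially)
  define y1 where "y1 = yp n"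
  define q1 where "q1 = qp n"
  define y2 where "y2 = ym m"
  define q2 where "q2 = qm m"
  have y1i: "y1 \<in> interior (Kset b)" and y2i: "y2 \<in> interior (Kset b)"
    using P1 M1 by (auto simp: y1_def y2_def)
  have "eventually (\<lambda>x. q1 \<le> argminp H x) (to_dplus b)"
    using H4 unfolding condH4_def filterlim_at_top by blast
  then obtain w1 where w1: "u \<le> w1" "w1 \<in> interior (Kset b)"
      "\<forall>x. x \<in> interior (Kset b) \<and> w1 \<le> x \<longrightarrow> q1 \<le> argminp H x"
    using ev_plus[OF _ assms(3)] by blast
  have "eventually (\<lambda>x. argminp H x \<le> q2) (to_dminus b)"
    using H4 unfolding condH4_def filterlim_at_bot by blast
  then obtain w2 where w2: "w2 \<le> -u" "w2 \<in> interior (Kset b)"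
      "\<forall>x. x \<in> interior (Kset b) \<and> x \<le> w2 \<longrightarrow> argminp H x \<le> q2"
    using ev_minus[OF _ mu] by blast
  define M where "M = max (max u y1) (max (-y2) (max w1 (-w2)))"
  have Mge: "u \<le> M" "y1 \<le> M" "-y2 \<le> M" "w1 \<le> M" "-w2 \<le> M" by (auto simp: M_def)
  have Mi: "M \<in> interior (Kset b)"
  proof -
    have "-y2 \<in> interior (Kset b)" "-w2 \<in> interior (Kset b)" using intK_neg y2i w2(2) by auto
    thus ?thesis using assms(3) y1i w1(2) unfolding M_def interior_K by (auto split: if_splits)
  qed
  define v where "v = (if b then (M+1)/2 else M+1)"
  have Mv: "M < v" and vi: "v \<in> interior (Kset b)" using Mi by (auto simp: v_def interior_K split: if_splits)
  have uv: "u < v" using Mge Mv by linarith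
  have v1: "b \<Longrightarrow> v < 1" using vi by (auto simp: interior_K)
  have vpos: "v > 0" using uv assms(2) by linarith
  have intR: "dHp H x p < 0" if "x \<in> interior (Kset b)" "v \<le> x" "p < q1" for x p
  proof -
    have "q1 \<le> argminp H x" using w1(3) that Mge Mv by auto
    thus ?thesis using turn_int_right[OF H that(1) _ that(3)] by blast
  qed
  have intL: "dHp H x p > 0" if "x \<in> interior (Kset b)" "x \<le> -v" "p > q2" for x p
  proof -
    have "argminp H x \<le> q2" using w2(3) that Mge Mv by auto
    thus ?thesis using turn_int_left[OF H that(1) _ that(3)] by blast
  qed
  have turnR: "dHp H x p < 0" if x: "x \<in> Kset b" "v \<le> x" and p: "p < q1" for x p
  proof (cases "x \<in> interior (Kset b)")
    case True then show ?thesis using intR x p by blast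
  next
    case False
    hence bx: "b" "x = 1 \<or> x = -1" using K_bd[OF x(1)] by auto
    hence x1: "x = 1" using x vpos by auto
    have one: "1 \<in> Kset b" using bx by (simp add: Kset_def)
    have "dHp H 1 p < 0"
    proof (rule boundary_neg[where F = "dHp H" and e = 1 and v = v and ?q0.0 = q1])
      show "\<And>p q. p < q \<Longrightarrow> dHp H 1 p < dHp H 1 q" using H_reg(2)[OF H1 one] by blast
      show "dHp H x p < 0" if "v \<le> x" "x < 1" "p < q1" for x p
      proof -
        have "x \<in> interior (Kset b)" using that bx vpos by (auto simp: interior_K)
        thus ?thesis using intR that by blast
      qed
      show "\<exists>L\<ge>0. \<forall>x\<in>{v..1}. \<bar>dHp H x p - dHp H 1 p\<bar> \<le> L*\<bar>x - 1\<bar>" for p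
      proof -
        obtain L where L: "L \<ge> 0" "\<forall>x1 x2 p1 p2. x1\<in>Kset b \<and> x2 \<in> Kset b \<and> \<bar>x1\<bar>\<le>max 1 \<bar>p\<bar> \<and> \<bar>x2\<bar> \<le> max 1 \<bar>p\<bar> \<and> \<bar>p1\<bar> \<le> max 1 \<bar>p\<bar> \<and> \<bar>p2\<bar> \<le> max 1 \<bar>p\<bar> \<longrightarrow>
           \<bar>dHp H x1 p1 - dHp H x2 p2\<bar> \<le> L*(\<bar>x1-x2\<bar>+\<bar>p1-p2\<bar>) \<and>
           \<bar>dHx H x1 p1 - dHx H x2 p2\<bar> \<le> L*(\<bar>x1-x2\<bar>+\<bar>p1-p2\<bar>)"
          using H_reg(1)[OF H1, of "max 1 \<bar>p\<bar>"] by blast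
        have "\<forall>x\<in>{v..1}. \<bar>dHp H x p - dHp H 1 p\<bar> \<le> L*\<bar>x - 1\<bar>"
        proof
          fix x assume x: "x \<in> {v..1}"
          hence "x \<in> Kset b" "\<bar>x\<bar> \<le> max 1 \<bar>p\<bar>" using bx vpos by (auto simp: Kset_def)
          moreover have "\<bar>1::real\<bar> \<le> max 1 \<bar>p\<bar>" "\<bar>p\<bar> \<le> max 1 \<bar>p\<bar>" by auto
          ultimately have "\<bar>dHp H x p - dHp H 1 p\<bar> \<le> L*(\<bar>x - 1\<bar> + \<bar>p - p\<bar>)"
            using L(2) one by blast
          thus "\<bar>dHp H x p - dHp H 1 p\<bar> \<le> L*\<bar>x - 1\<bar>" by simp
        qed
        thus ?thesis using L(1) by blast
      qed
      show "v < 1" using v1 bx by auto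
      show "p < q1" by fact
    qed
    thus ?thesis using x1 by simp
  qed
  have turnL: "dHp H x p > 0" if x: "x \<in> Kset b" "x \<le> -v" and p: "p > q2" for x p
  proof (cases "x \<in> interior (Kset b)")
    case True then show ?thesis using intL x p by blast
  next
    case False
    hence bx: "b" "x = 1 \<or> x = -1" using K_bd[OF x(1)] by auto
    hence x1: "x = -1" using x vpos by auto
    have one: "-1 \<in> Kset b" using bx by (simp add: Kset_def)
    have "(\<lambda>x p. - dHp H (-x) (-p)) 1 (-p) < 0"
    proof (rule boundary_neg[where F = "\<lambda>x p. - dHp H (-x) (-p)" and e = 1 and v = v and ?q0.0 = "-q2"])
      show "\<And>p q. p < q \<Longrightarrow> - dHp H (-1) (-p) < - dHp H (-1) (-q)" using H_reg(2)[OF H1 one] by force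
      show "- dHp H (-x) (-p) < 0" if "v \<le> x" "x < 1" "p < -q2" for x p
      proof -
        have "-x \<in> interior (Kset b)" using that bx vpos by (auto simp: interior_K)
        thus ?thesis using intL[of "-x" "-p"] that by auto
      qed
      show "\<exists>L\<ge>0. \<forall>x\<in>{v..1}. \<bar>- dHp H (-x) (-p) - - dHp H (-1) (-p)\<bar> \<le> L*\<bar>x - 1\<bar>" for p
      proof -
        obtain L where L: "L \<ge> 0" "\<forall>x1 x2 p1 p2. x1\<in>Kset b \<and> x2 \<in> Kset b \<and> \<bar>x1\<bar>\<le>max 1 \<bar>p\<bar> \<and> \<bar>x2\<bar> \<le> max 1 \<bar>p\<bar> \<and> \<bar>p1\<bar> \<le> max 1 \<bar>p\<bar> \<and> \<bar>p2\<bar> \<le> max 1 \<bar>p\<bar> \<longrightarrow>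
           \<bar>dHp H x1 p1 - dHp H x2 p2\<bar> \<le> L*(\<bar>x1-x2\<bar>+\<bar>p1-p2\<bar>) \<and>
           \<bar>dHx H x1 p1 - dHx H x2 p2\<bar> \<le> L*(\<bar>x1-x2\<bar>+\<bar>p1-p2\<bar>)"
          using H_reg(1)[OF H1, of "max 1 \<bar>p\<bar>"] by blast
        have "\<forall>x\<in>{v..1}. \<bar>- dHp H (-x) (-p) - - dHp H (-1) (-p)\<bar> \<le> L*\<bar>x - 1\<bar>"
        proof
          fix x assume x: "x \<in> {v..1}"
          hence "-x \<in> Kset b" "\<bar>-x\<bar> \<le> max 1 \<bar>p\<bar>" using bx vpos by (auto simp: Kset_def)
          moreover have "\<bar>-1::real\<bar> \<le> max 1 \<bar>p\<bar>" "\<bar>-p\<bar> \<le> max 1 \<bar>p\<bar>" by auto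
          ultimately have "\<bar>dHp H (-x) (-p) - dHp H (-1) (-p)\<bar> \<le> L*(\<bar>-x - -1\<bar> + \<bar>-p - -p\<bar>)"
            using L(2) one by blast
          moreover have "\<bar>-x - -1\<bar> = \<bar>x - 1\<bar>" by arith
          ultimately show "\<bar>- dHp H (-x) (-p) - - dHp H (-1) (-p)\<bar> \<le> L*\<bar>x - 1\<bar>" by simp
        qed
        thus ?thesis using L(1) by blast
      qed
      show "v < 1" using v1 bx by auto
      show "-p < -q2" using p by simp
    qed
    thus ?thesis using x1 by simp
  qed
  show ?thesis
  proof (intro exI conjI allI impI ballI)
    show "u < v" by fact
    show "v \<in> interior (Kset b)" by fact
    fix t x p s
    assume A: "0 \<le> t \<and> x \<in> {-v<..<v} \<and> ereal t < exit_time b H x p \<and> Xflow b H x p t \<in> {-u<..<u}"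
      and s: "s \<in> {0..t}"
    have t0: "0 \<le> t" using A by simp
    obtain T Y where hs: "ham_sol b H x p T Y" and tT: "t < T"
      using A unfolding exit_time_def less_SUP_iff by auto
    have fl: "Xflow b H x p r = fst (Y r)" if "r \<in> {0..t}" for r
      using flow_eq[OF H1 hs, of r] that tT unfolding Xflow_def by auto
    note F = ham_facts[OF hs t0 tT]
    obtain c0 where c0: "\<forall>r\<in>{0..t}. \<bar>fst (Y r)\<bar> \<le> c0 \<and> \<bar>snd (Y r)\<bar> \<le> c0" using F(4) by blast
    define c where "c = max c0 (max \<bar>y1\<bar> (max \<bar>q1\<bar> (max \<bar>y2\<bar> \<bar>q2\<bar>)))"
    have cge: "c0 \<le> c" "\<bar>y1\<bar> \<le> c" "\<bar>q1\<bar> \<le> c" "\<bar>y2\<bar> \<le> c" "\<bar>q2\<bar> \<le> c" unfolding c_def by (simp_all add: le_max_iff_disj)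
    obtain L where L: "L \<ge> 0" "\<forall>x1 x2 p1 p2. x1\<in>Kset b \<and> x2 \<in> Kset b \<and> \<bar>x1\<bar>\<le>c \<and> \<bar>x2\<bar> \<le> c \<and> \<bar>p1\<bar> \<le> c \<and> \<bar>p2\<bar> \<le> c \<longrightarrow>
       \<bar>dHp H x1 p1 - dHp H x2 p2\<bar> \<le> L*(\<bar>x1-x2\<bar>+\<bar>p1-p2\<bar>) \<and>
       \<bar>dHx H x1 p1 - dHx H x2 p2\<bar> \<le> L*(\<bar>x1-x2\<bar>+\<bar>p1-p2\<bar>)"
      using H_reg(1)[OF H1, of c] by blast
    have Xt: "fst (Y t) \<in> {-u<..<u}" using A fl[of t] t0 by auto
    have X0: "fst (Y 0) = x" using F(6) by simp
    have y1K: "y1 \<in> Kset b" and y2K: "y2 \<in> Kset b" using y1i y2i interior_subset by blast+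
    have R: "\<forall>r\<in>{0..t}. fst (Y r) < v"
    proof (rule core_side[where X = "\<lambda>r. fst (Y r)" and P = "\<lambda>r. snd (Y r)" and F = "dHp H"
          and G = "\<lambda>x p. - dHx H x p" and S = "Kset b" and c = c and L = L and qn = q1 and yn = y1
          and u = u and v = v and t = t])
      show "0 \<le> t" by fact
      show "continuous_on {0..t} (\<lambda>r. fst (Y r))" "continuous_on {0..t} (\<lambda>r. snd (Y r))" using F(1,2) .
      show "((\<lambda>r. fst (Y r)) has_real_derivative dHp H (fst (Y \<xi>)) (snd (Y \<xi>))) (at \<xi>) \<and>
          ((\<lambda>r. snd (Y r)) has_real_derivative - dHx H (fst (Y \<xi>)) (snd (Y \<xi>))) (at \<xi>)"
        if "0 < \<xi>" "\<xi> < t" for \<xi> using F(3)[of \<xi>] that tT by auto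
      show "fst (Y r) \<in> Kset b \<and> \<bar>fst (Y r)\<bar> \<le> c \<and> \<bar>snd (Y r)\<bar> \<le> c" if "r \<in> {0..t}" for r
      proof -
        have "\<bar>fst (Y r)\<bar> \<le> c0" "\<bar>snd (Y r)\<bar> \<le> c0" using c0 that by auto
        moreover have "fst (Y r) \<in> Kset b" using F(5) that by auto
        ultimately show ?thesis using cge by linarith
      qed
      show "\<bar>dHp H x1 p1 - dHp H x2 p2\<bar> \<le> L*(\<bar>x1-x2\<bar>+\<bar>p1-p2\<bar>) \<and>
          \<bar>- dHx H x1 p1 - - dHx H x2 p2\<bar> \<le> L*(\<bar>x1-x2\<bar>+\<bar>p1-p2\<bar>)"
        if "x1\<in>Kset b" "x2\<in>Kset b" "\<bar>x1\<bar>\<le>c" "\<bar>x2\<bar>\<le>c" "\<bar>p1\<bar>\<le>c" "\<bar>p2\<bar>\<le>c" for x1 x2 p1 p2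
      proof -
        have "\<bar>dHp H x1 p1 - dHp H x2 p2\<bar> \<le> L*(\<bar>x1-x2\<bar>+\<bar>p1-p2\<bar>) \<and>
           \<bar>dHx H x1 p1 - dHx H x2 p2\<bar> \<le> L*(\<bar>x1-x2\<bar>+\<bar>p1-p2\<bar>)" using L(2) that by blast
        moreover have "\<bar>- dHx H x1 p1 - - dHx H x2 p2\<bar> = \<bar>dHx H x1 p1 - dHx H x2 p2\<bar>" by linarith
        ultimately show ?thesis by simp
      qed
      show "0 \<le> L" by fact
      show "dHp H y1 q \<ge> 0" if "q \<ge> q1" for q using P3 that by (auto simp: y1_def q1_def)
      show "- dHx H y q1 \<ge> 0" if "y \<in> Kset b" "y \<ge> y1" for y using P4 that by (auto simp: y1_def q1_def)
      show "y1 \<in> Kset b" "\<bar>y1\<bar> \<le> c" "\<bar>q1\<bar> \<le> c" using y1K cge by auto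
      show "dHp H x p \<noteq> 0" if "x \<in> Kset b" "x \<ge> v" "p < q1" for x p using turnR[OF that] by simp
      show "u < y1" using n by (simp add: y1_def)
      show "y1 \<le> v" using Mge Mv by linarith
      show "fst (Y 0) < v" using X0 A by auto
      show "fst (Y t) < u" using Xt by auto
    qed
    have Lft: "\<forall>r\<in>{0..t}. - fst (Y r) < v"
    proof (rule core_side[where X = "\<lambda>r. - fst (Y r)" and P = "\<lambda>r. - snd (Y r)" and F = "\<lambda>x p. - dHp H (-x) (-p)"
          and G = "\<lambda>x p. dHx H (-x) (-p)" and S = "Kset b" and c = c and L = L and qn = "-q2" and yn = "-y2"
          and u = u and v = v and t = t])
      show "0 \<le> t" by fact
      show "continuous_on {0..t} (\<lambda>r. - fst (Y r))" "continuous_on {0..t} (\<lambda>r. - snd (Y r))"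
        using F(1,2) by (auto intro: continuous_on_minus)
      show "((\<lambda>r. - fst (Y r)) has_real_derivative - dHp H (- (- fst (Y \<xi>))) (- (- snd (Y \<xi>)))) (at \<xi>) \<and>
          ((\<lambda>r. - snd (Y r)) has_real_derivative dHx H (- (- fst (Y \<xi>))) (- (- snd (Y \<xi>)))) (at \<xi>)"
        if "0 < \<xi>" "\<xi> < t" for \<xi>
      proof -
        have d: "((\<lambda>r. fst (Y r)) has_real_derivative dHp H (fst (Y \<xi>)) (snd (Y \<xi>))) (at \<xi>) \<and>
          ((\<lambda>r. snd (Y r)) has_real_derivative - dHx H (fst (Y \<xi>)) (snd (Y \<xi>))) (at \<xi>)"
          using F(3)[of \<xi>] that tT by auto
        show ?thesis using DERIV_minus[OF conjunct1[OF d]] DERIV_minus[OF conjunct2[OF d]] by simp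
      qed
      show "- fst (Y r) \<in> Kset b \<and> \<bar>- fst (Y r)\<bar> \<le> c \<and> \<bar>- snd (Y r)\<bar> \<le> c" if "r \<in> {0..t}" for r
      proof -
        have "\<bar>fst (Y r)\<bar> \<le> c0" "\<bar>snd (Y r)\<bar> \<le> c0" using c0 that by auto
        moreover have "- fst (Y r) \<in> Kset b" using F(5) that Kset_neg by auto
        ultimately show ?thesis using cge by auto
      qed
      show "\<bar>- dHp H (-x1) (-p1) - - dHp H (-x2) (-p2)\<bar> \<le> L*(\<bar>x1-x2\<bar>+\<bar>p1-p2\<bar>) \<and>
          \<bar>dHx H (-x1) (-p1) - dHx H (-x2) (-p2)\<bar> \<le> L*(\<bar>x1-x2\<bar>+\<bar>p1-p2\<bar>)"
        if "x1\<in>Kset b" "x2\<in>Kset b" "\<bar>x1\<bar>\<le>c" "\<bar>x2\<bar>\<le>c" "\<bar>p1\<bar>\<le>c" "\<bar>p2\<bar>\<le>c" for x1 x2 p1 p2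
      proof -
        have "-x1 \<in> Kset b" "-x2 \<in> Kset b" using that Kset_neg by auto
        hence "\<bar>dHp H (-x1) (-p1) - dHp H (-x2) (-p2)\<bar> \<le> L*(\<bar>-x1 - -x2\<bar>+\<bar>-p1 - -p2\<bar>) \<and>
           \<bar>dHx H (-x1) (-p1) - dHx H (-x2) (-p2)\<bar> \<le> L*(\<bar>-x1 - -x2\<bar>+\<bar>-p1 - -p2\<bar>)"
        proof -
          have "\<bar>-x1\<bar> \<le> c" "\<bar>-x2\<bar> \<le> c" "\<bar>-p1\<bar> \<le> c" "\<bar>-p2\<bar> \<le> c" using that by auto
          thus ?thesis using L(2) \<open>-x1 \<in> Kset b\<close> \<open>-x2 \<in> Kset b\<close> by blast
        qed
        moreover have "\<bar>-x1 - -x2\<bar> = \<bar>x1-x2\<bar>" "\<bar>-p1 - -p2\<bar> = \<bar>p1-p2\<bar>" by arith+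
        moreover have "\<bar>- dHp H (-x1) (-p1) - - dHp H (-x2) (-p2)\<bar> = \<bar>dHp H (-x1) (-p1) - dHp H (-x2) (-p2)\<bar>"
          by linarith
        ultimately show ?thesis by simp
      qed
      show "0 \<le> L" by fact
      show "- dHp H (- (-y2)) (-q) \<ge> 0" if "q \<ge> -q2" for q
      proof -
        have "-q \<le> qm m" using that by (simp add: q2_def)
        thus ?thesis using M3 by (auto simp: y2_def)
      qed
      show "dHx H (-y) (- (-q2)) \<ge> 0" if "y \<in> Kset b" "y \<ge> -y2" for y
      proof -
        have "-y \<in> Kset b \<and> -y \<le> ym m" using that Kset_neg by (auto simp: y2_def)
        thus ?thesis using M4 by (auto simp: q2_def)
      qed
      show "-y2 \<in> Kset b" "\<bar>-y2\<bar> \<le> c" "\<bar>-q2\<bar> \<le> c" using y2K Kset_neg cge by auto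
      show "- dHp H (-x) (-p) \<noteq> 0" if "x \<in> Kset b" "x \<ge> v" "p < -q2" for x p
        using turnL[of "-x" "-p"] that Kset_neg by force
      show "u < -y2" using m by (simp add: y2_def)
      show "-y2 \<le> v" using Mge Mv by linarith
      show "- fst (Y 0) < v" using X0 A by auto
      show "- fst (Y t) < u" using Xt by auto
    qed
    show "Xflow b H x p s \<in> {-v<..<v}" using R Lft s fl[OF s] by force
  qed
qed

end
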